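(* Let $c>1$ be a real number which is not an integer and let $m$ be a positive integer. Then the sequence $(\lfloor n^c\rfloor)_{n}$ is $k$-uniformly distributed modulo $m$ for every integer $k$ with $1\le k\le c+1$.
   Context: For positive integers $m,k$, a sequence of integers $(u_n)_n$ is called $k$-uniformly distributed modulo $m$ if for every block $B\in\{0,1,\ldots,m-1\}^k$, \[\lim_{N\to\infty}\frac1N\operatorname{Card}\{n<N : (u_n,u_{n+1},\ldots,u_{n+k-1})\equiv B \pmod m\}=\frac1{m^k},\] where the congruence of $k$-tuples is understood componentwise. *)

theory Defs
  imports "HOL-Analysis.Analysis"
begin

definition k_unif_distrib_mod :: "nat \<Rightarrow> nat \<Rightarrow> (nat \<Rightarrow> int) \<Rightarrow> bool" where
  "k_unif_distrib_mod k m u \<longleftrightarrow>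
     (\<forall>B :: int list. length B = k \<and> set B \<subseteq> {0..<int m} \<longrightarrow>
        ((\<lambda>N. real (card {n. n < N \<and> (\<forall>i<k. u (n + i) mod int m = B ! i)}) / real N)
          \<longlonglongrightarrow> 1 / real m ^ k))"

end

theory Submission
  imports Defs "HOL-Probability.Characteristic_Functions" "HOL-Computational_Algebra.Polynomial"
begin

definition ee :: "real \<Rightarrow> complex" where "ee t = cis (2 * pi * t)"

definition wz :: "(nat \<Rightarrow> real) \<Rightarrow> bool" where
  "wz f \<longleftrightarrow> ((\<lambda>N. (\<Sum>n<N. ee (f n)) / of_nat N) \<longlonglongrightarrow> 0)"

lemma norm_ee [simp]: "norm (ee t) = 1" by (simp add: ee_def)
lemma ee_add: "ee (a + b) = ee a * ee b" by (simp add: ee_def distrib_left cis_mult)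
lemma ee_diff: "ee (a - b) = ee a * cnj (ee b)"
  by (simp add: ee_def cis_cnj cis_mult right_diff_distrib)

lemma shift_sum_bound:
  fixes u :: "nat \<Rightarrow> complex"
  assumes "\<And>n. norm (u n) \<le> 1"
  shows "norm ((\<Sum>n<N. u (n + r)) - (\<Sum>n<N. u n)) \<le> 2 * real r"
proof (induction r)
  case 0 then show ?case by simp
next
  case (Suc r)
  have tel: "(\<Sum>n<N. u (n + Suc r)) - (\<Sum>n<N. u (n + r)) = u (N + r) - u r"
    using sum_lessThan_telescope[of "\<lambda>n. u (n + r)" N] by (simp add: sum_subtractf)
  have "norm (u (N + r) - u r) \<le> 2"
    using norm_triangle_ineq4[of "u (N+r)" "u r"] assms[of "N+r"] assms[of r] by linarith
  have eq: "(\<Sum>n<N. u (n + Suc r)) - (\<Sum>n<N. u n) = (u (N + r) - u r) + ((\<Sum>n<N. u (n + r)) - (\<Sum>n<N. u n))"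
    using tel by (simp add: algebra_simps)
  have "norm ((\<Sum>n<N. u (n + Suc r)) - (\<Sum>n<N. u n)) = norm ((u (N + r) - u r) + ((\<Sum>n<N. u (n + r)) - (\<Sum>n<N. u n)))"
    by (metis eq)
  also have "\<dots> \<le> norm (u (N + r) - u r) + norm ((\<Sum>n<N. u (n + r)) - (\<Sum>n<N. u n))"
    by (rule norm_triangle_ineq)
  finally have "norm ((\<Sum>n<N. u (n + Suc r)) - (\<Sum>n<N. u n)) \<le> 2 + 2 * real r"
    using Suc `norm (u (N + r) - u r) \<le> 2` by linarith
  then show ?case by simp
qed

lemma pair_bound_ge:
  fixes u :: "nat \<Rightarrow> complex"
  assumes u1: "\<And>n. norm (u n) = 1" and "s \<le> r"
  shows "norm (\<Sum>n<N. u (n + r) * cnj (u (n + s))) \<le> norm (\<Sum>n<N. u (n + (r - s)) * cnj (u n)) + 2 * real s"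
proof -
  define w where "w n = u (n + (r - s)) * cnj (u n)" for n
  have w1: "norm (w n) \<le> 1" for n by (simp add: w_def norm_mult u1)
  have "(\<Sum>n<N. u (n + r) * cnj (u (n + s))) = (\<Sum>n<N. w (n + s))"
    using assms(2) by (intro sum.cong) (auto simp: w_def algebra_simps)
  then have "norm ((\<Sum>n<N. u (n + r) * cnj (u (n + s))) - (\<Sum>n<N. w n)) \<le> 2 * real s"
    using shift_sum_bound[where u=w and N=N and r=s, OF w1] by simp
  then show ?thesis unfolding w_def
    using norm_triangle_ineq2[of "\<Sum>n<N. u (n + r) * cnj (u (n + s))" "\<Sum>n<N. u (n + (r - s)) * cnj (u n)"]
    by linarith
qed

lemma pair_bound:
  fixes u :: "nat \<Rightarrow> complex"
  assumes u1: "\<And>n. norm (u n) = 1" and r: "r < H" and s: "s < H"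
  shows "norm (\<Sum>n<N. u (n + r) * cnj (u (n + s))) \<le>
     (if r = s then real N else (\<Sum>d\<in>{1..<H}. norm (\<Sum>n<N. u (n + d) * cnj (u n)))) + 2 * real H"
proof (cases "r = s")
  case True
  have "norm (\<Sum>n<N. u (n + r) * cnj (u (n + s))) \<le> (\<Sum>n<N. norm (u (n + r) * cnj (u (n + s))))"
    by (rule norm_sum)
  also have "\<dots> = real N" by (simp add: norm_mult u1)
  finally show ?thesis using True by simp
next
  case False
  define Sg where "Sg = (\<Sum>d\<in>{1..<H}. norm (\<Sum>n<N. u (n + d) * cnj (u n)))"
  have memb: "norm (\<Sum>n<N. u (n + d) * cnj (u n)) \<le> Sg" if "1 \<le> d" "d < H" for d
    unfolding Sg_def by (rule member_le_sum) (use that in auto)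
  show ?thesis
  proof (cases "s < r")
    case True
    have a: "norm (\<Sum>n<N. u (n + (r - s)) * cnj (u n)) \<le> Sg" using memb[of "r - s"] True r by simp
    have "real s \<le> real H" using s by simp
    then show ?thesis using pair_bound_ge[where u=u and s=s and r=r and N=N, OF u1] a False True
      unfolding Sg_def[symmetric] by simp
  next
    case F2: False
    then have "r < s" using False by simp
    have "(\<Sum>n<N. u (n + r) * cnj (u (n + s))) = cnj (\<Sum>n<N. u (n + s) * cnj (u (n + r)))"
      by (simp add: mult.commute)
    then have "norm (\<Sum>n<N. u (n + r) * cnj (u (n + s))) = norm (\<Sum>n<N. u (n + s) * cnj (u (n + r)))"
      by (metis complex_mod_cnj)
    moreover have a: "norm (\<Sum>n<N. u (n + (s - r)) * cnj (u n)) \<le> Sg" using memb[of "s - r"] `r < s` s by simp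
    moreover have "real r \<le> real H" using r by simp
    ultimately show ?thesis using pair_bound_ge[where u=u and s=r and r=s and N=N, OF u1] False `r < s`
      unfolding Sg_def[symmetric] by simp
  qed
qed

lemma vdc_ineq:
  fixes u :: "nat \<Rightarrow> complex"
  assumes u1: "\<And>n. norm (u n) = 1" and H: "H \<ge> 1"
  shows "(norm (\<Sum>n<N. u n))\<^sup>2 \<le> 2 * real N ^ 2 / real H
     + 2 * real N * (\<Sum>d\<in>{1..<H}. norm (\<Sum>n<N. u (n + d) * cnj (u n))) + 4 * real N * real H + 8 * real H ^ 2"
proof -
  define Sg where "Sg = (\<Sum>d\<in>{1..<H}. norm (\<Sum>n<N. u (n + d) * cnj (u n)))"
  have Sg0: "Sg \<ge> 0" unfolding Sg_def by (simp add: sum_nonneg)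
  define S where "S = (\<Sum>n<N. u n)"
  define v where "v n = (\<Sum>r<H. u (n + r))" for n
  define W where "W = (\<Sum>n<N. v n)"
  have step1: "norm (of_nat H * S - W) \<le> 2 * real H ^ 2"
  proof -
    have "of_nat H * S - W = (\<Sum>r<H. S - (\<Sum>n<N. u (n + r)))"
      unfolding W_def v_def by (simp add: sum_subtractf sum.swap[of _ "{..<H}"])
    also have "norm \<dots> \<le> (\<Sum>r<H. norm (S - (\<Sum>n<N. u (n + r))))" by (rule norm_sum)
    also have "\<dots> \<le> (\<Sum>r<H. 2 * real H)"
    proof (rule sum_mono)
      fix r assume "r \<in> {..<H}"
      then have "2 * real r \<le> 2 * real H" by simp
      moreover have "norm (S - (\<Sum>n<N. u (n + r))) \<le> 2 * real r"
        using shift_sum_bound[where u=u and N=N and r=r] u1 unfolding S_def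
        by (simp add: norm_minus_commute)
      ultimately show "norm (S - (\<Sum>n<N. u (n + r))) \<le> 2 * real H" by linarith
    qed
    also have "\<dots> = 2 * real H ^ 2" by (simp add: power2_eq_square)
    finally show ?thesis .
  qed
  have step2: "(norm W)\<^sup>2 \<le> (\<Sum>n<N. (norm (v n))\<^sup>2) * real N"
  proof -
    have "norm W \<le> (\<Sum>n<N. norm (v n))" unfolding W_def by (rule norm_sum)
    then have "(norm W)\<^sup>2 \<le> (\<Sum>n<N. norm (v n))\<^sup>2"
      by (simp add: power_mono)
    also have "\<dots> \<le> (\<Sum>n<N. (norm (v n))\<^sup>2) * real N"
      using sum_squared_le_sum_of_squares[of "\<lambda>n. norm (v n)" "{..<N}"] by simp
    finally show ?thesis .
  qed
  have step3: "(\<Sum>n<N. (norm (v n))\<^sup>2) \<le> (\<Sum>r<H. \<Sum>s<H. norm (\<Sum>n<N. u (n + r) * cnj (u (n + s))))"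
  proof -
    have e1: "complex_of_real ((norm (v n))\<^sup>2) = (\<Sum>r<H. \<Sum>s<H. u (n + r) * cnj (u (n + s)))" for n
      unfolding complex_norm_square v_def by (simp add: sum_product cnj_sum)
    have "(\<Sum>n<N. (norm (v n))\<^sup>2) = norm (complex_of_real (\<Sum>n<N. (norm (v n))\<^sup>2))"
      by (metis (no_types, lifting) abs_of_nonneg norm_of_real sum_nonneg zero_le_power2)
    also have "complex_of_real (\<Sum>n<N. (norm (v n))\<^sup>2) = (\<Sum>r<H. \<Sum>s<H. \<Sum>n<N. u (n + r) * cnj (u (n + s)))"
      unfolding of_real_sum e1
      by (simp add: sum.swap[of _ "{..<N}"])
    also have "norm \<dots> \<le> (\<Sum>r<H. norm (\<Sum>s<H. \<Sum>n<N. u (n + r) * cnj (u (n + s))))" by (rule norm_sum)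
    also have "\<dots> \<le> (\<Sum>r<H. \<Sum>s<H. norm (\<Sum>n<N. u (n + r) * cnj (u (n + s))))"
      by (intro sum_mono norm_sum)
    finally show ?thesis .
  qed
  have step4: "(\<Sum>r<H. \<Sum>s<H. norm (\<Sum>n<N. u (n + r) * cnj (u (n + s)))) \<le>
      real H * real N + real H ^ 2 * Sg + 2 * real H ^ 3"
  proof -
    have "(\<Sum>r<H. \<Sum>s<H. norm (\<Sum>n<N. u (n + r) * cnj (u (n + s)))) \<le>
       (\<Sum>r<H. \<Sum>s<H. (if r = s then real N else 0) + Sg + 2 * real H)"
    proof (intro sum_mono)
      fix r s assume "r \<in> {..<H}" "s \<in> {..<H}"
      then show "norm (\<Sum>n<N. u (n + r) * cnj (u (n + s))) \<le> (if r = s then real N else 0) + Sg + 2 * real H"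
        using pair_bound[where u=u and r=r and s=s and H=H and N=N, OF u1] Sg0 unfolding Sg_def[symmetric]
        by (auto split: if_splits)
    qed
    also have "\<dots> = real H * real N + real H ^ 2 * Sg + 2 * real H ^ 3"
      by (simp add: sum.distrib power2_eq_square power3_eq_cube algebra_simps)
    finally show ?thesis .
  qed
  have "real H * norm S \<le> norm W + 2 * real H ^ 2"
    using step1 norm_triangle_ineq2[of "of_nat H * S" W] by (simp add: norm_mult)
  then have "(real H * norm S)\<^sup>2 \<le> (norm W + 2 * real H ^ 2)\<^sup>2"
    by (intro power_mono) auto
  also have "\<dots> \<le> 2 * (norm W)\<^sup>2 + 8 * real H ^ 4"
  proof -
    have sq: "(x + y)\<^sup>2 \<le> 2 * x\<^sup>2 + 2 * y\<^sup>2" for x y :: real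
    proof -
      have "2 * x\<^sup>2 + 2 * y\<^sup>2 - (x + y)\<^sup>2 = (x - y)\<^sup>2" by (simp add: power2_eq_square algebra_simps)
      then show ?thesis using zero_le_power2[of "x - y"] by linarith
    qed
    have "(2 * real H ^ 2)\<^sup>2 = 4 * real H ^ 4" by (simp add: power2_eq_square power4_eq_xxxx)
    then show ?thesis using sq[of "norm W" "2 * real H ^ 2"] by linarith
  qed
  finally have A: "real H ^ 2 * (norm S)\<^sup>2 \<le> 2 * (norm W)\<^sup>2 + 8 * real H ^ 4"
    by (simp add: power_mult_distrib)
  have B: "(norm W)\<^sup>2 \<le> (real H * real N + real H ^ 2 * Sg + 2 * real H ^ 3) * real N"
  proof -
    have "(\<Sum>n<N. (norm (v n))\<^sup>2) \<le> real H * real N + real H ^ 2 * Sg + 2 * real H ^ 3"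
      using step3 step4 by linarith
    then have "(\<Sum>n<N. (norm (v n))\<^sup>2) * real N \<le> (real H * real N + real H ^ 2 * Sg + 2 * real H ^ 3) * real N"
      by (rule mult_right_mono) simp
    then show ?thesis using step2 by linarith
  qed
  have Hpos: "real H > 0" using H by simp
  have "real H ^ 2 * (norm S)\<^sup>2 \<le> real H ^ 2 * (2 * real N ^ 2 / real H + 2 * real N * Sg + 4 * real N * real H + 8 * real H ^ 2)"
  proof -
    have "real H ^ 2 * (2 * real N ^ 2 / real H + 2 * real N * Sg + 4 * real N * real H + 8 * real H ^ 2)
      = 2 * ((real H * real N + real H ^ 2 * Sg + 2 * real H ^ 3) * real N) + 8 * real H ^ 4"
      using Hpos by (simp add: field_simps power2_eq_square power3_eq_cube power4_eq_xxxx)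
    then show ?thesis using A B by linarith
  qed
  then have "(norm S)\<^sup>2 \<le> 2 * real N ^ 2 / real H + 2 * real N * Sg + 4 * real N * real H + 8 * real H ^ 2"
    using Hpos by (simp add: mult_le_cancel_left)
  then show ?thesis unfolding S_def Sg_def .
qed

lemma vdc:
  fixes f :: "nat \<Rightarrow> real"
  assumes hyp: "\<And>d. d \<ge> 1 \<Longrightarrow> wz (\<lambda>n. f (n + d) - f n)"
  shows "wz f"
proof -
  define u where "u n = ee (f n)" for n
  have u1: "norm (u n) = 1" for n by (simp add: u_def)
  define T where "T N d = (\<Sum>n<N. u (n + d) * cnj (u n))" for N d
  have Tlim: "(\<lambda>N. norm (T N d) / real N) \<longlonglongrightarrow> 0" if "d \<ge> 1" for d
  proof -
    have "(\<lambda>N. (\<Sum>n<N. ee (f (n + d) - f n)) / of_nat N) \<longlonglongrightarrow> 0"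
      using hyp[OF that] unfolding wz_def .
    moreover have "(\<Sum>n<N. ee (f (n + d) - f n)) = T N d" for N
      unfolding T_def u_def by (simp add: ee_diff)
    ultimately have "(\<lambda>N. T N d / of_nat N) \<longlonglongrightarrow> 0" by simp
    then have "(\<lambda>N. norm (T N d / of_nat N)) \<longlonglongrightarrow> 0" by (rule tendsto_norm_zero)
    then show ?thesis by (simp add: norm_divide)
  qed
  have main: "eventually (\<lambda>N. norm ((\<Sum>n<N. ee (f n)) / of_nat N) < e) sequentially" if e: "e > 0" for e
  proof -
    define H where "H = nat \<lceil>4 / e\<^sup>2\<rceil> + 1"
    have H1: "H \<ge> 1" by (simp add: H_def)
    have "real H > 4 / e\<^sup>2" unfolding H_def by linarith
    then have H4: "4 < real H * e\<^sup>2" using e by (simp add: pos_divide_less_eq)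
    have Hp: "real H > 0" using H1 by simp
    have H2: "2 / real H < e\<^sup>2 / 2" using H4 Hp by (simp add: field_simps)
    define g where "g N = 2 * (\<Sum>d\<in>{1..<H}. norm (T N d) / real N) + 4 * real H / real N + 8 * real H ^ 2 / real N ^ 2" for N
    have i1: "(\<lambda>N. 1 / real N) \<longlonglongrightarrow> 0" by (rule lim_inverse_n')
    have l1: "(\<lambda>N. 2 * (\<Sum>d\<in>{1..<H}. norm (T N d) / real N)) \<longlonglongrightarrow> 2 * (\<Sum>d\<in>{1..<H}. 0)"
      by (intro tendsto_mult tendsto_const tendsto_sum Tlim) simp
    have l2: "(\<lambda>N. 4 * real H * (1 / real N)) \<longlonglongrightarrow> 4 * real H * 0"
      by (intro tendsto_mult tendsto_const i1)
    have l3: "(\<lambda>N. 8 * real H ^ 2 * ((1 / real N) * (1 / real N))) \<longlonglongrightarrow> 8 * real H ^ 2 * (0 * 0)"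
      by (intro tendsto_mult tendsto_const i1)
    have "(\<lambda>N. 2 * (\<Sum>d\<in>{1..<H}. norm (T N d) / real N) + 4 * real H * (1 / real N) + 8 * real H ^ 2 * ((1 / real N) * (1 / real N))) \<longlonglongrightarrow> 0"
      using tendsto_add[OF tendsto_add[OF l1 l2] l3] by simp
    moreover have "g = (\<lambda>N. 2 * (\<Sum>d\<in>{1..<H}. norm (T N d) / real N) + 4 * real H * (1 / real N) + 8 * real H ^ 2 * ((1 / real N) * (1 / real N)))"
      unfolding g_def by (rule ext) (simp add: power2_eq_square)
    ultimately have "g \<longlonglongrightarrow> 0" by (simp only:)
    then have ev1: "eventually (\<lambda>N. g N < e\<^sup>2 / 2) sequentially"
      using e by (intro order_tendstoD(2)) auto
    have ev2: "eventually (\<lambda>N. N \<ge> 1) sequentially" by (rule eventually_ge_at_top)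
    show "eventually (\<lambda>N. norm ((\<Sum>n<N. ee (f n)) / of_nat N) < e) sequentially"
      using ev1 ev2
    proof eventually_elim
      case (elim N)
      have Npos: "real N > 0" using elim by simp
      have "(norm (\<Sum>n<N. u n))\<^sup>2 \<le> 2 * real N ^ 2 / real H
         + 2 * real N * (\<Sum>d\<in>{1..<H}. norm (T N d)) + 4 * real N * real H + 8 * real H ^ 2"
        using vdc_ineq[where u=u and H=H and N=N, OF u1 H1] unfolding T_def .
      then have "(norm (\<Sum>n<N. u n))\<^sup>2 / real N ^ 2 \<le> 2 / real H + g N"
        using Npos unfolding g_def by (simp add: field_simps power2_eq_square sum_divide_distrib[symmetric])
      also have "\<dots> < e\<^sup>2" using elim H2 by linarith
      finally have "(norm ((\<Sum>n<N. u n) / of_nat N))\<^sup>2 < e\<^sup>2"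
        by (simp add: norm_divide power_divide)
      then have "norm ((\<Sum>n<N. u n) / of_nat N) < e"
        using e by (smt (verit) power_mono norm_ge_zero)
      then show ?case unfolding u_def .
    qed
  qed
  show ?thesis unfolding wz_def tendsto_iff dist_norm using main by simp
qed

lemma ee_iexp: "ee t = iexp (2 * pi * t)"
  by (simp add: ee_def cis_conv_exp mult.commute)

lemma ee_approx: "norm (ee t - 1 - \<i> * (2 * pi * t)) \<le> 2 * pi\<^sup>2 * t\<^sup>2"
proof -
  have "norm (iexp (2 * pi * t) - (\<Sum>k \<le> 1. (\<i> * (2 * pi * t))^k / fact k)) \<le> \<bar>2 * pi * t\<bar>^2 / fact 2"
    using iexp_approx1[of "2 * pi * t" 1] by (simp add: numeral_2_eq_2)
  moreover have "(\<Sum>k \<le> 1. (\<i> * (2 * pi * t))^k / fact k) = 1 + \<i> * (2 * pi * t)" by simp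
  moreover have "\<bar>2 * pi * t\<bar>^2 / fact 2 = 2 * pi\<^sup>2 * t\<^sup>2"
    by (simp add: power2_eq_square abs_mult)
  ultimately show ?thesis by (simp add: ee_iexp diff_diff_add)
qed

lemma step_alg:
  fixes E X c d G :: complex
  assumes "G \<noteq> 0"
  shows "(E * X - E) / G - c * E = E * ((X - 1 - c * d) / G) + E * (c * ((d - G) / G))"
  using assms by (simp add: field_simps)

lemma step_bound:
  fixes E :: complex and g g' D :: real
  assumes E1: "norm E = 1" and gp: "g' > 0" and "g' \<le> D" "D \<le> g"
  shows "norm ((E * ee D - E) / of_real g - \<i> * (2 * pi) * E) \<le> 2 * pi\<^sup>2 * g + 2 * pi * ((g - g') / g)"
proof -
  have g0: "g > 0" using assms by linarith
  define c where "c = \<i> * (2 * complex_of_real pi)"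
  have nc: "norm c = 2 * pi" by (simp add: c_def norm_mult)
  have eq: "(E * ee D - E) / of_real g - c * E
     = E * ((ee D - 1 - c * of_real D) / of_real g) + E * (c * ((of_real D - of_real g) / of_real g))"
    using g0 by (intro step_alg) simp
  have ap: "norm (ee D - 1 - c * of_real D) \<le> 2 * pi\<^sup>2 * D\<^sup>2"
    using ee_approx[of D] by (simp add: c_def mult.assoc)
  have n1: "norm (E * ((ee D - 1 - c * of_real D) / of_real g)) \<le> 2 * pi\<^sup>2 * g"
  proof -
    have "norm (E * ((ee D - 1 - c * of_real D) / of_real g)) = norm (ee D - 1 - c * of_real D) / g"
      using g0 E1 by (simp add: norm_mult norm_divide)
    also have "\<dots> \<le> 2 * pi\<^sup>2 * D\<^sup>2 / g" using ap g0 by (simp add: divide_right_mono)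
    also have "\<dots> \<le> 2 * pi\<^sup>2 * g\<^sup>2 / g"
      using assms g0 by (intro divide_right_mono mult_left_mono power_mono) auto
    also have "\<dots> = 2 * pi\<^sup>2 * g" using g0 by (simp add: power2_eq_square)
    finally show ?thesis .
  qed
  have n2: "norm (E * (c * ((of_real D - of_real g) / of_real g))) \<le> 2 * pi * ((g - g') / g)"
  proof -
    have "norm (E * (c * ((of_real D - of_real g) / of_real g))) = 2 * pi * (\<bar>D - g\<bar> / g)"
      using E1 g0 nc by (simp add: norm_mult norm_divide flip: of_real_diff)
    also have "\<bar>D - g\<bar> / g \<le> (g - g') / g" using assms g0 by (simp add: divide_right_mono)
    finally show ?thesis by simp
  qed
  have "norm ((E * ee D - E) / of_real g - c * E) \<le> 2 * pi\<^sup>2 * g + 2 * pi * ((g - g') / g)"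
    unfolding eq using norm_triangle_le[OF add_mono[OF n1 n2]] .
  then show ?thesis by (simp add: c_def)
qed

lemma abel_bound:
  fixes E :: "nat \<Rightarrow> complex" and w :: "nat \<Rightarrow> real"
  assumes E1: "\<And>n. norm (E n) \<le> 1" and wpos: "\<And>n. n \<ge> a \<Longrightarrow> w n > 0"
    and wmono: "\<And>n. n \<ge> a \<Longrightarrow> w n \<le> w (Suc n)" and N: "N \<ge> a"
  shows "norm (\<Sum>n\<in>{a..<N}. (E (Suc n) - E n) * of_real (w n)) \<le> 2 * w N"
proof -
  have claim: "norm ((\<Sum>n\<in>{a..<N}. (E (Suc n) - E n) * of_real (w n)) - E N * of_real (w N)) \<le> w N"
    using N
  proof (induction N rule: dec_induct)
    case base
    then show ?case using E1[of a] wpos[of a] by (simp add: norm_mult mult_left_le_one_le)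
  next
    case (step N)
    have eq: "(\<Sum>n\<in>{a..<Suc N}. (E (Suc n) - E n) * of_real (w n)) - E (Suc N) * of_real (w (Suc N))
      = ((\<Sum>n\<in>{a..<N}. (E (Suc n) - E n) * of_real (w n)) - E N * of_real (w N))
        - E (Suc N) * of_real (w (Suc N) - w N)"
      using step(1) by (simp add: algebra_simps)
    have "norm (E (Suc N) * of_real (w (Suc N) - w N)) = norm (E (Suc N)) * \<bar>w (Suc N) - w N\<bar>"
      by (simp only: norm_mult norm_of_real)
    also have "\<dots> \<le> w (Suc N) - w N"
      using E1[of "Suc N"] wmono[OF step(1)] by (simp add: mult_left_le_one_le)
    finally have "norm (E (Suc N) * of_real (w (Suc N) - w N)) \<le> w (Suc N) - w N" .
    then show ?case unfolding eq using step(3) norm_triangle_ineq4 by (smt (verit))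
  qed
  have "norm (E N * of_real (w N)) \<le> w N"
    using E1[of N] wpos[OF N] by (simp add: norm_mult mult_left_le_one_le)
  then show ?thesis using claim norm_triangle_ineq2 by (smt (verit))
qed

lemma cesaro0:
  fixes x :: "nat \<Rightarrow> real"
  assumes "x \<longlonglongrightarrow> 0"
  shows "(\<lambda>N. (\<Sum>n<N. \<bar>x n\<bar>) / real N) \<longlonglongrightarrow> 0"
proof -
  have main: "eventually (\<lambda>N. \<bar>(\<Sum>n<N. \<bar>x n\<bar>) / real N\<bar> < e) sequentially" if e: "e > 0" for e
  proof -
    obtain M where M: "\<And>n. n \<ge> M \<Longrightarrow> \<bar>x n\<bar> < e / 2"
      using assms e unfolding LIMSEQ_def dist_real_def by (metis diff_zero half_gt_zero)
    define C where "C = (\<Sum>n<M. \<bar>x n\<bar>)"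
    obtain n0 :: nat where n0: "2 * C / e + 1 < real n0" using reals_Archimedean2 by blast
    have "eventually (\<lambda>N. N \<ge> max M n0) sequentially" by (rule eventually_ge_at_top)
    then have ev: "eventually (\<lambda>N. N \<ge> M \<and> real N > 2 * C / e + 1) sequentially"
    proof (rule eventually_mono)
      fix N assume "N \<ge> max M n0"
      then have "N \<ge> M" "real N \<ge> real n0" by auto
      then show "N \<ge> M \<and> real N > 2 * C / e + 1" using n0 by linarith
    qed
    show ?thesis using ev
    proof eventually_elim
      case (elim N)
      have C0: "C \<ge> 0" unfolding C_def by (simp add: sum_nonneg)
      have Np: "real N > 0" using elim C0 e
        by (smt (verit, del_insts) divide_nonneg_pos)
      have "(\<Sum>n<N. \<bar>x n\<bar>) = C + (\<Sum>n\<in>{M..<N}. \<bar>x n\<bar>)"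
        unfolding C_def using elim by (metis sum.atLeastLessThan_concat lessThan_atLeast0 zero_le)
      also have "(\<Sum>n\<in>{M..<N}. \<bar>x n\<bar>) \<le> (\<Sum>n\<in>{M..<N}. e / 2)"
        using M by (intro sum_mono) (auto intro: less_imp_le)
      also have "\<dots> \<le> real N * (e / 2)" using e by simp
      finally have s: "(\<Sum>n<N. \<bar>x n\<bar>) \<le> C + real N * (e / 2)" by simp
      have "C < real N * (e / 2)"
      proof -
        have "2 * C / e < real N" using elim by linarith
        then show ?thesis using e by (simp add: field_simps)
      qed
      then have "(\<Sum>n<N. \<bar>x n\<bar>) < real N * e" using s by linarith
      then show ?case using Np by (simp add: sum_nonneg field_simps)
    qed
  qed
  show ?thesis unfolding tendsto_iff dist_real_def using main by simp
qed

lemma wz_ev_cong: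
  assumes eq: "\<And>n. n \<ge> n0 \<Longrightarrow> f n = g n" and wf: "wz f"
  shows "wz g"
proof -
  define C where "C = (\<Sum>n<n0. ee (g n) - ee (f n))"
  have ev: "eventually (\<lambda>N. (\<Sum>n<N. ee (f n)) / of_nat N + C * inverse (of_nat N) = (\<Sum>n<N. ee (g n)) / of_nat N) sequentially"
    using eventually_ge_at_top[of n0]
  proof eventually_elim
    case (elim N)
    have "(\<Sum>n<N. ee (g n) - ee (f n)) = C + (\<Sum>n\<in>{n0..<N}. ee (g n) - ee (f n))"
      unfolding C_def using elim by (metis sum.atLeastLessThan_concat lessThan_atLeast0 zero_le)
    also have "(\<Sum>n\<in>{n0..<N}. ee (g n) - ee (f n)) = 0" using eq by simp
    finally have "(\<Sum>n<N. ee (g n)) - (\<Sum>n<N. ee (f n)) = C" by (simp add: sum_subtractf)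
    then have "(\<Sum>n<N. ee (g n)) = (\<Sum>n<N. ee (f n)) + C" by (metis diff_eq_eq add.commute)
    then show ?case by (simp add: divide_inverse distrib_right)
  qed
  have "(\<lambda>N. (\<Sum>n<N. ee (f n)) / of_nat N + C * inverse (of_nat N)) \<longlonglongrightarrow> 0 + C * 0"
    using wf unfolding wz_def by (intro tendsto_add tendsto_mult tendsto_const lim_inverse_n)
  then have "(\<lambda>N. (\<Sum>n<N. ee (f n)) / of_nat N + C * inverse (of_nat N)) \<longlonglongrightarrow> 0" by simp
  then show ?thesis unfolding wz_def using ev by (rule Lim_transform_eventually)
qed

lemma ee_neg: "ee (- t) = cnj (ee t)"
  by (simp add: ee_def cis_cnj)

lemma wz_neg:
  assumes "wz f" shows "wz (\<lambda>n. - f n)"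
proof -
  have "(\<lambda>N. cnj ((\<Sum>n<N. ee (f n)) / of_nat N)) \<longlonglongrightarrow> cnj 0"
    using assms unfolding wz_def by (intro tendsto_cnj)
  moreover have "(\<Sum>n<N. ee (- f n)) = cnj (\<Sum>n<N. ee (f n))" for N
    unfolding cnj_sum by (rule sum.cong) (simp_all add: ee_neg)
  ultimately show ?thesis unfolding wz_def by simp
qed

lemma fejer_dec:
  fixes f f' :: "real \<Rightarrow> real" and a :: nat
  assumes der: "\<And>x. x \<ge> real a \<Longrightarrow> (f has_real_derivative f' x) (at x)"
    and mono: "\<And>x y. real a \<le> x \<Longrightarrow> x \<le> y \<Longrightarrow> f' y \<le> f' x"
    and pos: "\<And>x. x \<ge> real a \<Longrightarrow> f' x > 0"
    and lim0: "(\<lambda>n. f' (real n)) \<longlonglongrightarrow> 0"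
    and limI: "filterlim (\<lambda>n. real n * f' (real n)) at_top sequentially"
  shows "wz (\<lambda>n. f (real n))"
proof -
  define E where "E n = ee (f (real n))" for n
  define g where "g n = f' (real n)" for n
  have E1: "norm (E n) = 1" for n by (simp add: E_def)
  have gpos: "g n > 0" if "n \<ge> a" for n using pos that unfolding g_def by simp
  have gmono: "g (Suc n) \<le> g n" if "n \<ge> a" for n using mono that unfolding g_def by simp
  have gmono2: "g n \<le> g a" if "n \<ge> a" for n
    using that by (induction n rule: dec_induct) (auto intro: order.trans[OF gmono])
  have per_n: "norm ((E (Suc n) - E n) / of_real (g n) - \<i> * (2 * pi) * E n)
      \<le> 2 * pi\<^sup>2 * g n + 2 * pi * (g a * (1 / g (Suc n) - 1 / g n))" if n: "n \<ge> a" for n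
  proof -
    define D where "D = f (real n + 1) - f (real n)"
    obtain z where z: "real n < z" "z < real n + 1" "f (real n + 1) - f (real n) = (real n + 1 - real n) * f' z"
      using MVT2[of "real n" "real n + 1" f f'] der n by force
    have Dz: "D = f' z" using z(3) unfolding D_def by simp
    have D1: "g (Suc n) \<le> D" unfolding Dz g_def using mono[of z "real (Suc n)"] z n by simp
    have D2: "D \<le> g n" unfolding Dz g_def using mono[of "real n" z] z n by simp
    have "f (real (Suc n)) = f (real n) + D" unfolding D_def by (simp add: algebra_simps)
    then have ES: "E (Suc n) = E n * ee D" unfolding E_def by (simp add: ee_add)
    have "norm ((E n * ee D - E n) / of_real (g n) - \<i> * (2 * pi) * E n)
       \<le> 2 * pi\<^sup>2 * g n + 2 * pi * ((g n - g (Suc n)) / g n)"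
      using step_bound[OF E1 gpos D1 D2] n by simp
    moreover have "(g n - g (Suc n)) / g n \<le> g a * (1 / g (Suc n) - 1 / g n)"
    proof -
      have p1: "g (Suc n) > 0" "g n > 0" using gpos n by auto
      have "(g n - g (Suc n)) / g n = g (Suc n) * (1 / g (Suc n) - 1 / g n)"
        using p1 by (simp add: field_simps)
      also have "\<dots> \<le> g a * (1 / g (Suc n) - 1 / g n)"
        using p1 gmono[OF n] gmono2[of "Suc n"] n
        by (intro mult_right_mono) (auto simp: field_simps)
      finally show ?thesis .
    qed
    ultimately show ?thesis unfolding ES by (smt (verit) mult_left_mono pi_gt_zero)
  qed
  have bound: "2 * pi * norm (\<Sum>n\<in>{a..<N}. E n) \<le> 2 / g N + 2 * pi * g a / g N + 2 * pi\<^sup>2 * (\<Sum>n<N. \<bar>g n\<bar>)"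
    if N: "N \<ge> a" for N
  proof -
    define A where "A = (\<Sum>n\<in>{a..<N}. (E (Suc n) - E n) / of_real (g n))"
    define B where "B = (\<Sum>n\<in>{a..<N}. E n)"
    have AB: "A - \<i> * (2 * pi) * B = (\<Sum>n\<in>{a..<N}. (E (Suc n) - E n) / of_real (g n) - \<i> * (2 * pi) * E n)"
      unfolding A_def B_def by (simp add: sum_subtractf sum_distrib_left)
    have "norm (A - \<i> * (2 * pi) * B) \<le> (\<Sum>n\<in>{a..<N}. norm ((E (Suc n) - E n) / of_real (g n) - \<i> * (2 * pi) * E n))"
      unfolding AB by (rule norm_sum)
    also have "\<dots> \<le> (\<Sum>n\<in>{a..<N}. 2 * pi\<^sup>2 * g n + 2 * pi * (g a * (1 / g (Suc n) - 1 / g n)))"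
      by (intro sum_mono per_n) auto
    also have "\<dots> = 2 * pi\<^sup>2 * (\<Sum>n\<in>{a..<N}. g n) + 2 * pi * g a * (\<Sum>n\<in>{a..<N}. 1 / g (Suc n) - 1 / g n)"
      by (simp add: sum.distrib sum_distrib_left mult.assoc)
    also have "(\<Sum>n\<in>{a..<N}. 1 / g (Suc n) - 1 / g n) = 1 / g N - 1 / g a"
      using sum_Suc_diff'[OF N, of "\<lambda>n. 1 / g n"] by simp
    also have "(\<Sum>n\<in>{a..<N}. g n) \<le> (\<Sum>n<N. \<bar>g n\<bar>)"
    proof -
      have "(\<Sum>n\<in>{a..<N}. g n) \<le> (\<Sum>n\<in>{a..<N}. \<bar>g n\<bar>)" by (intro sum_mono) simp
      also have "\<dots> \<le> (\<Sum>n<N. \<bar>g n\<bar>)" by (intro sum_mono2) auto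
      finally show ?thesis .
    qed
    finally have c1: "norm (A - \<i> * (2 * pi) * B) \<le> 2 * pi\<^sup>2 * (\<Sum>n<N. \<bar>g n\<bar>) + 2 * pi * g a * (1 / g N - 1 / g a)"
      by (smt (verit) mult_left_mono pi_gt_zero zero_le_power2)
    have gaN: "g a > 0" "g N > 0" using gpos N by auto
    have c2: "2 * pi * g a * (1 / g N - 1 / g a) \<le> 2 * pi * g a / g N"
      using gaN by (simp add: field_simps)
    have "A = (\<Sum>n\<in>{a..<N}. (E (Suc n) - E n) * of_real (1 / g n))"
      unfolding A_def by (simp add: divide_inverse)
    then have c3: "norm A \<le> 2 * (1 / g N)"
      using abel_bound[where E=E and w="\<lambda>n. 1 / g n" and a=a and N=N] E1 gpos gmono N
      by (simp add: frac_le)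
    have "2 * pi * norm B = norm (\<i> * (2 * pi) * B)" by (simp add: norm_mult)
    also have "\<dots> \<le> norm A + norm (A - \<i> * (2 * pi) * B)" by (metis norm_minus_commute norm_triangle_sub)
    finally show ?thesis using c1 c2 c3 unfolding B_def by simp
  qed
  define R where "R N = real a * inverse (real N) + ((1 / pi + g a) * inverse (real N * g N)) + pi * ((\<Sum>n<N. \<bar>g n\<bar>) / real N)" for N
  have geq: "g = (\<lambda>n. f' (real n))" by (rule ext) (simp add: g_def)
  have glim: "g \<longlonglongrightarrow> 0" using lim0 unfolding geq .
  have Rlim: "R \<longlonglongrightarrow> real a * 0 + (1 / pi + g a) * 0 + pi * 0"
    unfolding R_def
    by (intro tendsto_add tendsto_mult tendsto_const lim_inverse_n cesaro0 glim
        tendsto_inverse_0_at_top limI[unfolded g_def[symmetric]])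
  have ev: "eventually (\<lambda>N. norm ((\<Sum>n<N. E n) / of_nat N) \<le> R N) sequentially"
    using eventually_ge_at_top[of "max a 1"]
  proof eventually_elim
    case (elim N)
    then have N: "N \<ge> a" "N \<ge> 1" by auto
    have gN: "g N > 0" using gpos N by auto
    have "(\<Sum>n<N. E n) = (\<Sum>n<a. E n) + (\<Sum>n\<in>{a..<N}. E n)"
      using N by (metis sum.atLeastLessThan_concat lessThan_atLeast0 zero_le)
    then have "norm (\<Sum>n<N. E n) \<le> norm (\<Sum>n<a. E n) + norm (\<Sum>n\<in>{a..<N}. E n)"
      by (simp add: norm_triangle_ineq)
    also have "norm (\<Sum>n<a. E n) \<le> real a"
      using norm_sum[of E "{..<a}"] E1 by simp
    also have "norm (\<Sum>n\<in>{a..<N}. E n) \<le> (2 / g N + 2 * pi * g a / g N + 2 * pi\<^sup>2 * (\<Sum>n<N. \<bar>g n\<bar>)) / (2 * pi)"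
      using bound[OF N(1)] by (simp add: field_simps)
    finally have "norm (\<Sum>n<N. E n) \<le> real a + (2 / g N + 2 * pi * g a / g N + 2 * pi\<^sup>2 * (\<Sum>n<N. \<bar>g n\<bar>)) / (2 * pi)" 
      by simp
    moreover have "(real a + (2 / g N + 2 * pi * g a / g N + 2 * pi\<^sup>2 * (\<Sum>n<N. \<bar>g n\<bar>)) / (2 * pi)) / real N = R N"
      unfolding R_def using gN N by (simp add: field_simps power2_eq_square)
    ultimately have "norm (\<Sum>n<N. E n) / real N \<le> R N"
      by (metis divide_right_mono of_nat_0_le_iff)
    moreover have "norm ((\<Sum>n<N. E n) / of_nat N) = norm (\<Sum>n<N. E n) / real N"
      by (simp add: norm_divide)
    ultimately show ?case by simp
  qed
  have "(\<lambda>N. (\<Sum>n<N. E n) / of_nat N) \<longlonglongrightarrow> 0"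
    using Lim_null_comparison[OF ev] Rlim by simp
  then show ?thesis unfolding wz_def E_def .
qed

definition vdc_class :: "nat \<Rightarrow> (nat \<Rightarrow> real \<Rightarrow> real) \<Rightarrow> real \<Rightarrow> bool" where
  "vdc_class r D x0 \<longleftrightarrow> r \<ge> 1 \<and>
     (\<forall>j\<le>r. \<forall>x\<ge>x0. (D j has_real_derivative D (Suc j) x) (at x)) \<and>
     ((\<forall>x\<ge>x0. D (Suc r) x \<le> 0) \<or> (\<forall>x\<ge>x0. D (Suc r) x \<ge> 0)) \<and>
     ((\<lambda>n. D r (real n)) \<longlonglongrightarrow> 0) \<and>
     filterlim (\<lambda>n. real n * \<bar>D r (real n)\<bar>) at_top sequentially"

lemma dec_pos:
  fixes h :: "real \<Rightarrow> real"
  assumes mono: "\<And>x y. lo \<le> x \<Longrightarrow> x \<le> y \<Longrightarrow> h y \<le> h x"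
    and lim: "(\<lambda>n. h (real n)) \<longlonglongrightarrow> 0"
    and inf: "filterlim (\<lambda>n. real n * \<bar>h (real n)\<bar>) at_top sequentially"
    and y: "y \<ge> lo"
  shows "h y > 0"
proof -
  define m where "m = nat \<lceil>y\<rceil>"
  have my: "real m \<ge> y" unfolding m_def by linarith
  have hn: "h (real n) \<ge> 0" if "real n \<ge> lo" for n
  proof -
    have "\<forall>k\<ge>n. h (real k) \<le> h (real n)" using mono that by auto
    then show ?thesis using LIMSEQ_le_const2[OF lim] by blast
  qed
  have hy: "h y \<ge> h (real k)" if "k \<ge> m" for k
  proof -
    have "real m \<le> real k" using that by simp
    then have "y \<le> real k" using my by linarith
    then show ?thesis using mono[of y "real k"] y by blast
  qed
  show ?thesis
  proof (rule ccontr)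
    assume "\<not> h y > 0"
    then have z: "h (real k) = 0" if "k \<ge> m" for k
      using hy[OF that] hn[of k] that y my by (smt (verit) of_nat_le_iff)
    have "eventually (\<lambda>n. real n * \<bar>h (real n)\<bar> > 0) sequentially"
      using inf by (simp add: filterlim_at_top_dense)
    moreover have "eventually (\<lambda>n. n \<ge> m) sequentially" by (rule eventually_ge_at_top)
    ultimately have "eventually (\<lambda>n. False) sequentially"
      by eventually_elim (use z in auto)
    then show False by simp
  qed
qed

lemma class_step:
  assumes C: "vdc_class (Suc r) D x0" and r: "r \<ge> 1" and d: "d \<ge> (1::nat)"
  shows "vdc_class r (\<lambda>j x. D j (x + real d) - D j x) x0"
proof -
  have der: "\<And>j x. j \<le> Suc r \<Longrightarrow> x \<ge> x0 \<Longrightarrow> (D j has_real_derivative D (Suc j) x) (at x)"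
    using C unfolding vdc_class_def by blast
  have sgn: "(\<forall>x\<ge>x0. D (Suc (Suc r)) x \<le> 0) \<or> (\<forall>x\<ge>x0. D (Suc (Suc r)) x \<ge> 0)"
    using C unfolding vdc_class_def by blast
  have lim: "(\<lambda>n. D (Suc r) (real n)) \<longlonglongrightarrow> 0" and inf: "filterlim (\<lambda>n. real n * \<bar>D (Suc r) (real n)\<bar>) at_top sequentially"
    using C unfolding vdc_class_def by blast+
  obtain s :: real where s: "s = 1 \<or> s = -1" and smono: "\<And>x y. x0 \<le> x \<Longrightarrow> x \<le> y \<Longrightarrow> s * D (Suc r) y \<le> s * D (Suc r) x"
  proof (cases "\<forall>x\<ge>x0. D (Suc (Suc r)) x \<le> 0")
    case True
    show ?thesis
    proof (rule that[of 1])
      fix x y assume "x0 \<le> x" "x \<le> y"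
      then show "1 * D (Suc r) y \<le> 1 * D (Suc r) x"
        using deriv_nonpos_imp_antimono[of x y "D (Suc r)" "D (Suc (Suc r))"] der True by simp
    qed simp
  next
    case False
    then have F: "\<forall>x\<ge>x0. D (Suc (Suc r)) x \<ge> 0" using sgn by blast
    show ?thesis
    proof (rule that[of "-1"])
      fix x y assume "x0 \<le> x" "x \<le> y"
      then show "-1 * D (Suc r) y \<le> -1 * D (Suc r) x"
        using deriv_nonneg_imp_mono[of x y "D (Suc r)" "D (Suc (Suc r))"] der F by simp
    qed simp
  qed
  have s_abs: "\<bar>s * z\<bar> = \<bar>z\<bar>" for z using s by auto
  have spos: "s * D (Suc r) y > 0" if "y \<ge> x0" for y
  proof (rule dec_pos[where h="\<lambda>x. s * D (Suc r) x" and lo=x0])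
    show "(\<lambda>n. s * D (Suc r) (real n)) \<longlonglongrightarrow> 0" using tendsto_mult[OF tendsto_const lim, of s] by simp
    show "filterlim (\<lambda>n. real n * \<bar>s * D (Suc r) (real n)\<bar>) at_top sequentially" using inf by (simp add: s_abs)
  qed (use smono that in auto)
  have absD: "\<bar>D (Suc r) y\<bar> = s * D (Suc r) y" if "y \<ge> x0" for y
    using spos[OF that] s_abs[of "D (Suc r) y"] by simp
  have mv: "\<bar>D r (x + real d) - D r x\<bar> \<le> real d * \<bar>D (Suc r) x\<bar> \<and> real d * \<bar>D (Suc r) (x + real d)\<bar> \<le> \<bar>D r (x + real d) - D r x\<bar>"
    if x: "x \<ge> x0" for x
  proof -
    obtain z where z: "x < z" "z < x + real d" "D r (x + real d) - D r x = (x + real d - x) * D (Suc r) z"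
      using MVT2[of x "x + real d" "D r" "D (Suc r)"] der[of r] x d by force
    have "\<bar>D r (x + real d) - D r x\<bar> = real d * \<bar>D (Suc r) z\<bar>" using z(3) by (simp add: abs_mult)
    moreover have "\<bar>D (Suc r) z\<bar> \<le> \<bar>D (Suc r) x\<bar>" using absD[of z] absD[of x] smono[of x z] x z by simp
    moreover have "\<bar>D (Suc r) (x + real d)\<bar> \<le> \<bar>D (Suc r) z\<bar>"
      using absD[of z] absD[of "x + real d"] smono[of z "x + real d"] x z by simp
    ultimately show ?thesis by (simp add: mult_left_mono)
  qed
  have p1: "\<forall>j\<le>r. \<forall>x\<ge>x0. ((\<lambda>x. D j (x + real d) - D j x) has_real_derivative D (Suc j) (x + real d) - D (Suc j) x) (at x)"
  proof (intro allI impI)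
    fix j x assume j: "j \<le> r" and x: "x0 \<le> x"
    have "(D j has_real_derivative D (Suc j) (x + real d)) (at (x + real d))" using der[of j "x + real d"] j x by simp
    then have "((\<lambda>x. D j (x + real d)) has_real_derivative D (Suc j) (x + real d)) (at x)" by (simp add: DERIV_shift)
    then show "((\<lambda>x. D j (x + real d) - D j x) has_real_derivative D (Suc j) (x + real d) - D (Suc j) x) (at x)"
      using der[of j x] j x by (intro DERIV_diff) auto
  qed
  have p2: "(\<forall>x\<ge>x0. D (Suc r) (x + real d) - D (Suc r) x \<le> 0) \<or> (\<forall>x\<ge>x0. D (Suc r) (x + real d) - D (Suc r) x \<ge> 0)"
    using s
  proof
    assume s1: "s = 1"
    have "D (Suc r) (x + real d) - D (Suc r) x \<le> 0" if "x \<ge> x0" for x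
      using smono[of x "x + real d"] that s1 by simp
    then show ?thesis by auto
  next
    assume s1: "s = -1"
    have "D (Suc r) (x + real d) - D (Suc r) x \<ge> 0" if "x \<ge> x0" for x
      using smono[of x "x + real d"] that s1 by simp
    then show ?thesis by auto
  qed
  have p3: "(\<lambda>n. D r (real n + real d) - D r (real n)) \<longlonglongrightarrow> 0"
  proof -
    have "(\<lambda>n. real d * \<bar>D (Suc r) (real n)\<bar>) \<longlonglongrightarrow> real d * 0"
      by (intro tendsto_mult tendsto_const tendsto_rabs_zero lim)
    then have L: "(\<lambda>n. real d * \<bar>D (Suc r) (real n)\<bar>) \<longlonglongrightarrow> 0" by simp
    have "eventually (\<lambda>n. norm (D r (real n + real d) - D r (real n)) \<le> real d * \<bar>D (Suc r) (real n)\<bar>) sequentially"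
    proof -
      obtain n0 :: nat where "real n0 \<ge> x0" using real_arch_simple by blast
      then show ?thesis using mv
        by (intro eventually_sequentiallyI[of n0]) (auto intro: order_trans[of x0 "real n0"])
    qed
    then show ?thesis by (rule Lim_null_comparison) (rule L)
  qed
  have p4: "filterlim (\<lambda>n. real n * \<bar>D r (real n + real d) - D r (real n)\<bar>) at_top sequentially"
  proof -
    have sh: "filterlim (\<lambda>n. real (n + d) * \<bar>D (Suc r) (real (n + d))\<bar>) at_top sequentially"
      using filterlim_compose[OF inf filterlim_add_const_nat_at_top] by simp
    have h2: "filterlim (\<lambda>n. (1/2) * (real (n + d) * \<bar>D (Suc r) (real (n + d))\<bar>)) at_top sequentially"
      by (rule filterlim_tendsto_pos_mult_at_top[OF tendsto_const _ sh]) simp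
    obtain n0 :: nat where n0: "real n0 \<ge> x0" using real_arch_simple by blast
    have "eventually (\<lambda>n. (1/2) * (real (n + d) * \<bar>D (Suc r) (real (n + d))\<bar>) \<le> real n * \<bar>D r (real n + real d) - D r (real n)\<bar>) sequentially"
    proof (rule eventually_sequentiallyI[of "max n0 d"])
      fix n assume n: "max n0 d \<le> n"
      then have x: "real n \<ge> x0" using n0 by (meson max.boundedE of_nat_le_iff order_trans)
      have "(1/2) * real (n + d) \<le> real n" using n by simp
      then have hh: "(1/2) * real (n + d) * \<bar>D (Suc r) (real (n + d))\<bar> \<le> real n * \<bar>D (Suc r) (real (n + d))\<bar>"
        by (rule mult_right_mono[OF _ abs_ge_zero])
      have "(1/2) * (real (n + d) * \<bar>D (Suc r) (real (n + d))\<bar>) \<le> real n * \<bar>D (Suc r) (real n + real d)\<bar>"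
        using hh by (simp only: mult.assoc of_nat_add)
      also have "\<dots> \<le> real n * (real d * \<bar>D (Suc r) (real n + real d)\<bar>)"
        using d by (intro mult_left_mono) (auto simp: mult_le_cancel_right1)
      also have "\<dots> \<le> real n * \<bar>D r (real n + real d) - D r (real n)\<bar>"
        using mv[OF x] by (intro mult_left_mono) auto
      finally show "(1/2) * (real (n + d) * \<bar>D (Suc r) (real (n + d))\<bar>) \<le> real n * \<bar>D r (real n + real d) - D r (real n)\<bar>" .
    qed
    then show ?thesis by (rule filterlim_at_top_mono[OF h2])
  qed
  show ?thesis unfolding vdc_class_def using r p1 p2 p3 p4 by simp
qed

lemma fejer_dec2:
  fixes f f' f'' :: "real \<Rightarrow> real"
  assumes der: "\<And>x. x \<ge> lo \<Longrightarrow> (f has_real_derivative f' x) (at x)"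
    and der2: "\<And>x. x \<ge> lo \<Longrightarrow> (f' has_real_derivative f'' x) (at x)"
    and sg: "\<And>x. x \<ge> lo \<Longrightarrow> f'' x \<le> 0"
    and lim: "(\<lambda>n. f' (real n)) \<longlonglongrightarrow> 0"
    and inf: "filterlim (\<lambda>n. real n * \<bar>f' (real n)\<bar>) at_top sequentially"
  shows "wz (\<lambda>n. f (real n))"
proof -
  define a where "a = nat \<lceil>lo\<rceil>"
  have a: "real a \<ge> lo" unfolding a_def by linarith
  have mono: "f' y \<le> f' x" if "lo \<le> x" "x \<le> y" for x y
    using deriv_nonpos_imp_antimono[of x y f' f''] der2 sg that by auto
  have pos: "f' x > 0" if "x \<ge> lo" for x
    using dec_pos[where h=f' and lo=lo, OF mono lim inf that] by blast
  show ?thesis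
  proof (rule fejer_dec[where f=f and f'=f' and a=a])
    show "(f has_real_derivative f' x) (at x)" if "real a \<le> x" for x using der a that by auto
    show "f' y \<le> f' x" if "real a \<le> x" "x \<le> y" for x y using mono a that by auto
    show "f' x > 0" if "real a \<le> x" for x using pos a that by auto
    show "(\<lambda>n. f' (real n)) \<longlonglongrightarrow> 0" by (rule lim)
    have "eventually (\<lambda>n. real n * \<bar>f' (real n)\<bar> \<le> real n * f' (real n)) sequentially"
    proof (rule eventually_sequentiallyI[of a])
      fix n assume "a \<le> n"
      then have "real a \<le> real n" by simp
      then have "real n \<ge> lo" using a by linarith
      then have "f' (real n) > 0" by (rule pos)
      then show "real n * \<bar>f' (real n)\<bar> \<le> real n * f' (real n)" by simp
    qed
    then show "filterlim (\<lambda>n. real n * f' (real n)) at_top sequentially"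
      by (rule filterlim_at_top_mono[OF inf])
  qed
qed

lemma class1_wz:
  assumes C: "vdc_class 1 D x0"
  shows "wz (\<lambda>n. D 0 (real n))"
proof -
  have der0: "\<And>x. x \<ge> x0 \<Longrightarrow> (D 0 has_real_derivative D 1 x) (at x)"
   and der1: "\<And>x. x \<ge> x0 \<Longrightarrow> (D 1 has_real_derivative D 2 x) (at x)"
    using C unfolding vdc_class_def by (auto simp: numeral_2_eq_2)
  have sgn: "(\<forall>x\<ge>x0. D 2 x \<le> 0) \<or> (\<forall>x\<ge>x0. D 2 x \<ge> 0)"
    using C unfolding vdc_class_def by (simp add: numeral_2_eq_2)
  have lim: "(\<lambda>n. D 1 (real n)) \<longlonglongrightarrow> 0" and inf: "filterlim (\<lambda>n. real n * \<bar>D 1 (real n)\<bar>) at_top sequentially"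
    using C unfolding vdc_class_def by auto
  from sgn show ?thesis
  proof
    assume s: "\<forall>x\<ge>x0. D 2 x \<le> 0"
    show ?thesis by (rule fejer_dec2[where f'="D 1" and f''="D 2" and lo=x0, OF der0 der1 _ lim inf]) (use s in auto)
  next
    assume s: "\<forall>x\<ge>x0. D 2 x \<ge> 0"
    have "wz (\<lambda>n. - D 0 (real n))"
    proof (rule fejer_dec2[where f="\<lambda>x. - D 0 x" and f'="\<lambda>x. - D 1 x" and f''="\<lambda>x. - D 2 x" and lo=x0])
      show "((\<lambda>x. - D 0 x) has_real_derivative - D 1 x) (at x)" if "x \<ge> x0" for x
        using der0[OF that] by (rule DERIV_minus)
      show "((\<lambda>x. - D 1 x) has_real_derivative - D 2 x) (at x)" if "x \<ge> x0" for x
        using der1[OF that] by (rule DERIV_minus)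
      show "- D 2 x \<le> 0" if "x \<ge> x0" for x using s that by auto
      show "(\<lambda>n. - D 1 (real n)) \<longlonglongrightarrow> 0" using tendsto_minus[OF lim] by simp
      show "filterlim (\<lambda>n. real n * \<bar>- D 1 (real n)\<bar>) at_top sequentially" using inf by simp
    qed
    then show ?thesis using wz_neg by fastforce
  qed
qed

lemma class_wz:
  assumes "vdc_class r D x0"
  shows "wz (\<lambda>n. D 0 (real n))"
  using assms
proof (induction r arbitrary: D)
  case 0
  then show ?case by (simp add: vdc_class_def)
next
  case (Suc r)
  show ?case
  proof (cases "r = 0")
    case True
    then show ?thesis using class1_wz Suc.prems by simp
  next
    case False
    then have r1: "r \<ge> 1" by simp
    show ?thesis
    proof (rule vdc)
      fix d :: nat assume d: "d \<ge> 1"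
      have "wz (\<lambda>n. D 0 (real n + real d) - D 0 (real n))"
        using Suc.IH[OF class_step[OF Suc.prems r1 d]] by simp
      then show "wz (\<lambda>n. D 0 (real (n + d)) - D 0 (real n))" by simp
    qed
  qed
qed

definition ffac :: "real \<Rightarrow> nat \<Rightarrow> real" where
  "ffac b j = (\<Prod>t<j. b - real t)"

lemma ffac_0 [simp]: "ffac b 0 = 1" by (simp add: ffac_def)
lemma ffac_Suc: "ffac b (Suc j) = ffac b j * (b - real j)" by (simp add: ffac_def)

lemma ffac_nz: assumes "b \<notin> \<int>" shows "ffac b j \<noteq> 0"
proof -
  have "b - real t \<noteq> 0" for t
  proof
    assume "b - real t = 0"
    then have "b = of_int (int t)" by simp
    then show False using assms by (metis Ints_of_int)
  qed
  then show ?thesis unfolding ffac_def by (simp add: prod_zero_iff)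
qed

lemma powr_deriv_lin:
  assumes "1 + a * t > 0"
  shows "((\<lambda>t. (1 + a * t) powr g) has_real_derivative (g * (1 + a * t) powr (g - 1) * a)) (at t)"
proof -
  have "((\<lambda>z. z powr g) has_real_derivative g * (1 + a * t) powr (g - 1)) (at (1 + a * t))"
    by (rule has_real_derivative_powr[OF assms])
  moreover have "((\<lambda>t. 1 + a * t) has_real_derivative a) (at t)"
    by (auto intro!: derivative_eq_intros)
  ultimately show ?thesis by (rule DERIV_chain2)
qed

lemma phi_expansion:
  fixes b :: real and w :: "nat \<Rightarrow> real" and k jz :: nat
  assumes Vz: "\<And>j. j < jz \<Longrightarrow> (\<Sum>i<k. w i * real i ^ j) = 0"
  shows "\<exists>B. \<forall>t. 0 < t \<and> t \<le> 1 \<longrightarrow>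
     \<bar>(\<Sum>i<k. w i * (1 + real i * t) powr b) - ffac b jz * (\<Sum>i<k. w i * real i ^ jz) / fact jz * t ^ jz\<bar> \<le> B * t ^ Suc jz"
proof -
  define diff where "diff m t = (\<Sum>i<k. w i * ffac b m * real i ^ m * (1 + real i * t) powr (b - real m))" for m t
  define g where "g = b - real (Suc jz)"
  define B0 where "B0 = (\<Sum>i<k. \<bar>w i\<bar> * \<bar>ffac b (Suc jz)\<bar> * real i ^ Suc jz * (1 + real i) powr \<bar>g\<bar>)"
  have d0: "diff 0 = (\<lambda>t. \<Sum>i<k. w i * (1 + real i * t) powr b)" by (rule ext) (simp add: diff_def)
  have dS: "DERIV (diff m) t :> diff (Suc m) t" if "t \<ge> 0" for m t
  proof -
    have "((\<lambda>t. w i * ffac b m * real i ^ m * (1 + real i * t) powr (b - real m)) has_real_derivative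
        w i * ffac b (Suc m) * real i ^ Suc m * (1 + real i * t) powr (b - real (Suc m))) (at t)" for i
    proof -
      have pos: "1 + real i * t > 0" using that by (simp add: add_pos_nonneg)
      have "((\<lambda>t. w i * ffac b m * real i ^ m * (1 + real i * t) powr (b - real m)) has_real_derivative
          w i * ffac b m * real i ^ m * ((b - real m) * (1 + real i * t) powr (b - real m - 1) * real i)) (at t)"
        by (intro DERIV_cmult powr_deriv_lin pos)
      moreover have "w i * ffac b m * real i ^ m * ((b - real m) * (1 + real i * t) powr (b - real m - 1) * real i)
          = w i * ffac b (Suc m) * real i ^ Suc m * (1 + real i * t) powr (b - real (Suc m))"
        by (simp add: ffac_Suc algebra_simps)
      ultimately show ?thesis by simp
    qed
    then show ?thesis unfolding diff_def by (intro DERIV_sum) auto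
  qed
  have bnd: "\<bar>diff (Suc jz) s\<bar> \<le> B0" if s: "0 \<le> s" "s \<le> 1" for s
  proof -
    have "\<bar>diff (Suc jz) s\<bar> \<le> (\<Sum>i<k. \<bar>w i * ffac b (Suc jz) * real i ^ Suc jz * (1 + real i * s) powr g\<bar>)"
      unfolding diff_def g_def by (rule sum_abs)
    also have "\<dots> \<le> B0" unfolding B0_def
    proof (intro sum_mono)
      fix i assume "i \<in> {..<k}"
      have p1: "1 \<le> 1 + real i * s" using s by simp
      have p2: "1 + real i * s \<le> 1 + real i" using s by (simp add: mult_left_le)
      have "(1 + real i * s) powr g \<le> (1 + real i * s) powr \<bar>g\<bar>" by (rule powr_mono[OF _ p1]) simp
      also have "\<dots> \<le> (1 + real i) powr \<bar>g\<bar>" by (rule powr_mono2) (use p1 p2 in auto)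
      finally have "(1 + real i * s) powr g \<le> (1 + real i) powr \<bar>g\<bar>" .
      then show "\<bar>w i * ffac b (Suc jz) * real i ^ Suc jz * (1 + real i * s) powr g\<bar>
          \<le> \<bar>w i\<bar> * \<bar>ffac b (Suc jz)\<bar> * real i ^ Suc jz * (1 + real i) powr \<bar>g\<bar>"
        by (simp add: abs_mult mult_left_mono)
    qed
    finally show ?thesis .
  qed
  have diff0: "diff m 0 = ffac b m * (\<Sum>i<k. w i * real i ^ m)" for m
    unfolding diff_def by (simp add: sum_distrib_left algebra_simps)
  show ?thesis
  proof (intro exI allI impI)
    fix t :: real assume t: "0 < t \<and> t \<le> 1"
    obtain s where s: "0 < s" "s < t"
      "diff 0 t = (\<Sum>m<Suc jz. diff m 0 / fact m * t ^ m) + diff (Suc jz) s / fact (Suc jz) * t ^ Suc jz"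
      using Maclaurin[of t "Suc jz" diff "diff 0"] dS t by auto
    have "(\<Sum>m<Suc jz. diff m 0 / fact m * t ^ m) = diff jz 0 / fact jz * t ^ jz"
      by (simp add: diff0 Vz)
    then have eq: "(\<Sum>i<k. w i * (1 + real i * t) powr b) - ffac b jz * (\<Sum>i<k. w i * real i ^ jz) / fact jz * t ^ jz
       = diff (Suc jz) s / fact (Suc jz) * t ^ Suc jz"
      using s(3) unfolding d0 by (simp add: diff0)
    have "\<bar>diff (Suc jz) s / fact (Suc jz) * t ^ Suc jz\<bar> \<le> B0 / fact (Suc jz) * t ^ Suc jz"
      using bnd[of s] s t by (simp add: abs_mult divide_right_mono mult_right_mono)
    then show "\<bar>(\<Sum>i<k. w i * (1 + real i * t) powr b) - ffac b jz * (\<Sum>i<k. w i * real i ^ jz) / fact jz * t ^ jz\<bar>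
        \<le> B0 / fact (Suc jz) * t ^ Suc jz" unfolding eq .
  qed
qed

lemma G_asym:
  fixes b :: real and w :: "nat \<Rightarrow> real" and k jz :: nat
  assumes Vz: "\<And>j. j < jz \<Longrightarrow> (\<Sum>i<k. w i * real i ^ j) = 0"
  shows "((\<lambda>x. x powr (real jz - b) * (\<Sum>i<k. w i * (x + real i) powr b))
          \<longlongrightarrow> ffac b jz * (\<Sum>i<k. w i * real i ^ jz) / fact jz) at_top"
proof -
  define L where "L = ffac b jz * (\<Sum>i<k. w i * real i ^ jz) / fact jz"
  obtain B where B0: "\<forall>t. 0 < t \<and> t \<le> 1 \<longrightarrow>
     \<bar>(\<Sum>i<k. w i * (1 + real i * t) powr b) - ffac b jz * (\<Sum>i<k. w i * real i ^ jz) / fact jz * t ^ jz\<bar> \<le> B * t ^ Suc jz"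
    using phi_expansion[where b=b and w=w and k=k and jz=jz, OF Vz] by blast
  have B: "\<bar>(\<Sum>i<k. w i * (1 + real i * t) powr b) - L * t ^ jz\<bar> \<le> B * t ^ Suc jz" if "0 < t" "t \<le> 1" for t
    using B0 that unfolding L_def by blast
  have ev: "eventually (\<lambda>x. norm (x powr (real jz - b) * (\<Sum>i<k. w i * (x + real i) powr b) - L) \<le> B * inverse x) at_top"
    using eventually_ge_at_top[of "1::real"]
  proof eventually_elim
    case (elim x)
    then have x0: "x > 0" by simp
    define t where "t = 1 / x"
    have t: "0 < t" "t \<le> 1" using elim unfolding t_def by auto
    have xi: "x + real i = x * (1 + real i * t)" for i using x0 unfolding t_def by (simp add: field_simps)
    have "(\<Sum>i<k. w i * (x + real i) powr b) = x powr b * (\<Sum>i<k. w i * (1 + real i * t) powr b)"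
      unfolding xi powr_mult by (simp add: sum_distrib_left algebra_simps)
    then have "x powr (real jz - b) * (\<Sum>i<k. w i * (x + real i) powr b)
        = (x powr (real jz - b) * x powr b) * (\<Sum>i<k. w i * (1 + real i * t) powr b)" by simp
    also have "x powr (real jz - b) * x powr b = x ^ jz"
      using x0 by (simp add: powr_add[symmetric] powr_realpow)
    finally have F: "x powr (real jz - b) * (\<Sum>i<k. w i * (x + real i) powr b) = x ^ jz * (\<Sum>i<k. w i * (1 + real i * t) powr b)" .
    have xt: "x ^ jz * t ^ jz = 1" using x0 unfolding t_def by (simp add: power_divide)
    have "x powr (real jz - b) * (\<Sum>i<k. w i * (x + real i) powr b) - L
        = x ^ jz * ((\<Sum>i<k. w i * (1 + real i * t) powr b) - L * t ^ jz)"
      unfolding F using xt by (simp add: algebra_simps)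
    then have "norm (x powr (real jz - b) * (\<Sum>i<k. w i * (x + real i) powr b) - L)
        = x ^ jz * \<bar>(\<Sum>i<k. w i * (1 + real i * t) powr b) - L * t ^ jz\<bar>"
      using x0 by (simp add: abs_mult)
    also have "\<dots> \<le> x ^ jz * (B * t ^ Suc jz)"
      using B[OF t] x0 by (intro mult_left_mono) auto
    also have "x ^ jz * (B * t ^ Suc jz) = B * inverse x"
      using xt x0 unfolding t_def by (simp add: field_simps)
    finally show ?case .
  qed
  have "((\<lambda>x. B * inverse x) \<longlongrightarrow> B * 0) at_top"
    by (intro tendsto_mult tendsto_const tendsto_inverse_0_at_top filterlim_ident)
  then have "((\<lambda>x. x powr (real jz - b) * (\<Sum>i<k. w i * (x + real i) powr b) - L) \<longlongrightarrow> 0) at_top"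
    using Lim_null_comparison[OF ev] by simp
  then show ?thesis unfolding L_def[symmetric] by (simp add: LIM_zero_iff)
qed

lemma vandermonde_nz:
  fixes w :: "nat \<Rightarrow> real"
  assumes i0: "i0 < k" and wi0: "w i0 \<noteq> 0"
  shows "\<exists>j<k. (\<Sum>i<k. w i * real i ^ j) \<noteq> 0"
proof (rule ccontr)
  assume "\<not> ?thesis"
  then have V0: "\<And>j. j < k \<Longrightarrow> (\<Sum>i<k. w i * real i ^ j) = 0" by auto
  define p :: "real poly" where "p = (\<Prod>t\<in>{..<k} - {i0}. [:- real t, 1:])"
  have "degree p \<le> (\<Sum>t\<in>{..<k} - {i0}. degree [:- real t, (1::real):])"
    unfolding p_def using degree_prod_sum_le[of "{..<k} - {i0}" "\<lambda>t. [:- real t, (1::real):]"] by (simp add: o_def)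
  also have "\<dots> = card ({..<k} - {i0})" by simp
  also have "\<dots> = k - 1" using i0 by simp
  finally have degp: "degree p < k" using i0 by simp
  have "(\<Sum>i<k. w i * poly p (real i)) = (\<Sum>i<k. \<Sum>j\<le>degree p. w i * (coeff p j * real i ^ j))"
    unfolding poly_altdef by (simp add: sum_distrib_left)
  also have "\<dots> = (\<Sum>j\<le>degree p. coeff p j * (\<Sum>i<k. w i * real i ^ j))"
    by (subst sum.swap) (simp add: sum_distrib_left algebra_simps)
  also have "\<dots> = 0" using degp V0 by (intro sum.neutral) auto
  finally have S0: "(\<Sum>i<k. w i * poly p (real i)) = 0" .
  have pz: "poly p (real i) = 0" if "i < k" "i \<noteq> i0" for i
  proof -
    have "i \<in> {..<k} - {i0}" using that by simp
    then show ?thesis unfolding p_def poly_prod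
      by (intro prod_zero) (auto intro!: bexI[of _ i])
  qed
  have pnz: "poly p (real i0) \<noteq> 0"
    unfolding p_def poly_prod by (simp add: prod_zero_iff)
  have "(\<Sum>i<k. w i * poly p (real i)) = w i0 * poly p (real i0) + (\<Sum>i\<in>{..<k} - {i0}. w i * poly p (real i))"
    using i0 by (subst sum.remove[of "{..<k}" i0]) auto
  also have "(\<Sum>i\<in>{..<k} - {i0}. w i * poly p (real i)) = 0"
    using pz by (intro sum.neutral) auto
  finally have "(\<Sum>i<k. w i * poly p (real i)) = w i0 * poly p (real i0)" by simp
  then show False using S0 wi0 pnz by simp
qed

lemma notint_shift: assumes "c \<notin> \<int>" shows "c - real j \<notin> \<int>"
proof
  assume "c - real j \<in> \<int>"
  then have "c - real j + real j \<in> \<int>" by (intro Ints_add) auto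
  then show False using assms by simp
qed

lemma powr_deriv_shift:
  assumes "x + a > 0"
  shows "((\<lambda>x. (x + a) powr g) has_real_derivative g * (x + a) powr (g - 1)) (at x)"
proof -
  have "((\<lambda>z. z powr g) has_real_derivative g * (x + a) powr (g - 1)) (at (x + a))"
    by (rule has_real_derivative_powr[OF assms])
  moreover have "((\<lambda>x. x + a) has_real_derivative 1) (at x)"
    by (auto intro!: derivative_eq_intros)
  ultimately show ?thesis using DERIV_chain2 by fastforce
qed

lemma powr_inf:
  assumes "s > 0"
  shows "filterlim (\<lambda>x::real. x powr s) at_top at_top"
proof -
  have "((\<lambda>x::real. x powr (- s)) \<longlongrightarrow> 0) at_top"
    using assms by (intro tendsto_neg_powr filterlim_ident) auto
  moreover have "eventually (\<lambda>x::real. 0 < x powr (- s)) at_top"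
    using eventually_gt_at_top[of "0::real"] by eventually_elim simp
  ultimately have "filterlim (\<lambda>x::real. inverse (x powr (- s))) at_top at_top"
    by (rule filterlim_inverse_at_top)
  then show ?thesis by (simp add: powr_minus)
qed

lemma F_wz:
  fixes c :: real and m k i0 :: nat and hv :: "nat \<Rightarrow> int"
  assumes c1: "c > 1" and cZ: "c \<notin> \<int>" and m: "m > 0" and kc: "real k \<le> c + 1"
    and i0: "i0 < k" and hi0: "hv i0 \<noteq> 0"
  shows "wz (\<lambda>n. \<Sum>i<k. of_int (hv i) * (real (n + i) powr c / real m))"
proof -
  define w where "w i = real_of_int (hv i) / real m" for i
  define V where "V j = (\<Sum>i<k. w i * real i ^ j)" for j
  have ex: "\<exists>j<k. V j \<noteq> 0" unfolding V_def using vandermonde_nz[of i0 k w] i0 hi0 m by (simp add: w_def)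
  define jz where "jz = (LEAST j. V j \<noteq> 0)"
  obtain j1 where j1: "j1 < k" "V j1 \<noteq> 0" using ex by blast
  have Vjz: "V jz \<noteq> 0" unfolding jz_def using j1(2) by (rule LeastI)
  have "jz \<le> j1" unfolding jz_def using j1(2) by (rule Least_le)
  then have jzk: "jz < k" using j1(1) by simp
  have Vlt: "V j = 0" if "j < jz" for j using that not_less_Least unfolding jz_def by blast
  have jzc: "real jz < c"
  proof -
    have "real jz \<le> c" using jzk kc by linarith
    moreover have "real jz \<noteq> c" using cZ by (metis Ints_of_nat)
    ultimately show ?thesis by simp
  qed
  have cc1: "c < real_of_int \<lceil>c\<rceil>"
    using cZ by (metis Ints_of_int le_of_int_ceiling order_le_less)
  have cc2: "real_of_int \<lceil>c\<rceil> < c + 1" by linarith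
  have cjz: "int jz < \<lceil>c\<rceil>" using jzc cc1 by linarith
  define r where "r = nat \<lceil>c\<rceil> - jz"
  have rjz: "real r + real jz = real_of_int \<lceil>c\<rceil>" unfolding r_def using cjz by simp
  have r1: "r \<ge> 1" unfolding r_def using cjz by simp
  define g where "g = c - real r - real jz"
  have g1: "-1 < g" "g < 0" unfolding g_def using rjz cc1 cc2 by linarith+
  define D where "D j x = ffac c j * (\<Sum>i<k. w i * (x + real i) powr (c - real j))" for j x
  have derD: "(D j has_real_derivative D (Suc j) x) (at x)" if x: "x > 0" for j x
  proof -
    have "((\<lambda>x. w i * (x + real i) powr (c - real j)) has_real_derivative
        w i * ((c - real j) * (x + real i) powr (c - real j - 1))) (at x)" for i
      using x by (intro DERIV_cmult powr_deriv_shift) simp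
    then have "((\<lambda>x. \<Sum>i<k. w i * (x + real i) powr (c - real j)) has_real_derivative
        (\<Sum>i<k. w i * ((c - real j) * (x + real i) powr (c - real j - 1)))) (at x)"
      by (intro DERIV_sum) auto
    then have "(D j has_real_derivative ffac c j * (\<Sum>i<k. w i * ((c - real j) * (x + real i) powr (c - real j - 1)))) (at x)"
      unfolding D_def by (intro DERIV_cmult)
    moreover have "ffac c j * (\<Sum>i<k. w i * ((c - real j) * (x + real i) powr (c - real j - 1))) = D (Suc j) x"
      unfolding D_def ffac_Suc by (simp add: sum_distrib_left algebra_simps)
    ultimately show ?thesis by simp
  qed
  have Vz: "(\<Sum>i<k. w i * real i ^ j) = 0" if "j < jz" for j using Vlt[OF that] unfolding V_def .
  define L1 where "L1 = ffac (c - real r) jz * V jz / fact jz"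
  define L2 where "L2 = ffac (c - real (Suc r)) jz * V jz / fact jz"
  have L1nz: "L1 \<noteq> 0" unfolding L1_def using ffac_nz[OF notint_shift[OF cZ]] Vjz by simp
  have L2nz: "L2 \<noteq> 0" unfolding L2_def using ffac_nz[OF notint_shift[OF cZ, of "Suc r"]] Vjz by simp
  have A1: "((\<lambda>x. x powr (- g) * D r x) \<longlongrightarrow> ffac c r * L1) at_top"
  proof -
    have "((\<lambda>x. x powr (real jz - (c - real r)) * (\<Sum>i<k. w i * (x + real i) powr (c - real r))) \<longlongrightarrow> L1) at_top"
      unfolding L1_def V_def by (rule G_asym[OF Vz])
    then have "((\<lambda>x. ffac c r * (x powr (real jz - (c - real r)) * (\<Sum>i<k. w i * (x + real i) powr (c - real r)))) \<longlongrightarrow> ffac c r * L1) at_top"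
      by (intro tendsto_mult tendsto_const)
    moreover have e: "real jz - (c - real r) = - g" unfolding g_def by simp
    ultimately have "((\<lambda>x. ffac c r * (x powr (- g) * (\<Sum>i<k. w i * (x + real i) powr (c - real r)))) \<longlongrightarrow> ffac c r * L1) at_top"
      by (simp only: e)
    then show ?thesis unfolding D_def by (simp add: mult.assoc mult.left_commute)
  qed
  have A2: "((\<lambda>x. x powr (1 - g) * D (Suc r) x) \<longlongrightarrow> ffac c (Suc r) * L2) at_top"
  proof -
    have "((\<lambda>x. x powr (real jz - (c - real (Suc r))) * (\<Sum>i<k. w i * (x + real i) powr (c - real (Suc r)))) \<longlongrightarrow> L2) at_top"
      unfolding L2_def V_def by (rule G_asym[OF Vz])
    then have "((\<lambda>x. ffac c (Suc r) * (x powr (real jz - (c - real (Suc r))) * (\<Sum>i<k. w i * (x + real i) powr (c - real (Suc r))))) \<longlongrightarrow> ffac c (Suc r) * L2) at_top"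
      by (intro tendsto_mult tendsto_const)
    moreover have e: "real jz - (c - real (Suc r)) = 1 - g" unfolding g_def by simp
    ultimately have "((\<lambda>x. ffac c (Suc r) * (x powr (1 - g) * (\<Sum>i<k. w i * (x + real i) powr (c - real (Suc r))))) \<longlongrightarrow> ffac c (Suc r) * L2) at_top"
      by (simp only: e)
    then show ?thesis unfolding D_def by (simp add: mult.assoc mult.left_commute)
  qed
  define K where "K = ffac c r * L1"
  define K2 where "K2 = ffac c (Suc r) * L2"
  have Knz: "K \<noteq> 0" unfolding K_def using ffac_nz[OF cZ] L1nz by simp
  have K2nz: "K2 \<noteq> 0" unfolding K2_def using ffac_nz[OF cZ] L2nz by simp
  have lim0: "(D r \<longlongrightarrow> 0) at_top"
  proof -
    have "((\<lambda>x. x powr g * (x powr (- g) * D r x)) \<longlongrightarrow> 0 * K) at_top"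
      using tendsto_mult[OF tendsto_neg_powr[OF g1(2) filterlim_ident] A1] unfolding K_def .
    moreover have "eventually (\<lambda>x. x powr g * (x powr (- g) * D r x) = D r x) at_top"
      using eventually_gt_at_top[of "0::real"]
      by eventually_elim (simp add: mult.assoc[symmetric] powr_add[symmetric])
    ultimately show ?thesis by (simp add: tendsto_cong)
  qed
  have inf: "filterlim (\<lambda>x. x * \<bar>D r x\<bar>) at_top at_top"
  proof -
    have "filterlim (\<lambda>x. \<bar>x powr (- g) * D r x\<bar> * x powr (1 + g)) at_top at_top"
      using Knz g1 by (intro filterlim_tendsto_pos_mult_at_top[OF tendsto_rabs[OF A1[folded K_def]]] powr_inf) auto
    moreover have "eventually (\<lambda>x. \<bar>x powr (- g) * D r x\<bar> * x powr (1 + g) = x * \<bar>D r x\<bar>) at_top"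
      using eventually_gt_at_top[of "0::real"]
    proof eventually_elim
      case (elim x)
      have "\<bar>x powr (- g) * D r x\<bar> * x powr (1 + g) = (x powr (- g) * x powr (1 + g)) * \<bar>D r x\<bar>"
        by (simp add: abs_mult)
      also have "x powr (- g) * x powr (1 + g) = x" using elim by (simp add: powr_add[symmetric])
      finally show ?case .
    qed
    ultimately show ?thesis using filterlim_cong by fastforce
  qed
  obtain X where X: "(\<forall>x\<ge>X. D (Suc r) x \<le> 0) \<or> (\<forall>x\<ge>X. D (Suc r) x \<ge> 0)"
  proof (cases "K2 > 0")
    case True
    have "eventually (\<lambda>x. x powr (1 - g) * D (Suc r) x > 0) at_top"
      using A2[folded K2_def] True by (rule order_tendstoD(1))
    then have "eventually (\<lambda>x. D (Suc r) x \<ge> 0) at_top"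
      using eventually_gt_at_top[of "0::real"]
      by eventually_elim (simp add: zero_less_mult_iff)
    then obtain X where "\<forall>x\<ge>X. D (Suc r) x \<ge> 0" by (auto simp: eventually_at_top_linorder)
    then show ?thesis using that by blast
  next
    case False
    then have K2n: "K2 < 0" using K2nz by simp
    have "eventually (\<lambda>x. x powr (1 - g) * D (Suc r) x < 0) at_top"
      using A2[folded K2_def] K2n by (rule order_tendstoD(2))
    then have "eventually (\<lambda>x. D (Suc r) x \<le> 0) at_top"
      using eventually_gt_at_top[of "0::real"]
      by eventually_elim (simp add: mult_less_0_iff)
    then obtain X where "\<forall>x\<ge>X. D (Suc r) x \<le> 0" by (auto simp: eventually_at_top_linorder)
    then show ?thesis using that by blast
  qed
  define x0 where "x0 = max 1 X"
  have C: "vdc_class r D x0"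
    unfolding vdc_class_def
  proof (intro conjI)
    show "1 \<le> r" by (rule r1)
    show "\<forall>j\<le>r. \<forall>x\<ge>x0. (D j has_real_derivative D (Suc j) x) (at x)"
      using derD unfolding x0_def by auto
    show "(\<forall>x\<ge>x0. D (Suc r) x \<le> 0) \<or> (\<forall>x\<ge>x0. 0 \<le> D (Suc r) x)"
      using X unfolding x0_def by auto
    show "(\<lambda>n. D r (real n)) \<longlonglongrightarrow> 0"
      using filterlim_compose[OF lim0 filterlim_real_sequentially] .
    show "filterlim (\<lambda>n. real n * \<bar>D r (real n)\<bar>) at_top sequentially"
      using filterlim_compose[OF inf filterlim_real_sequentially] .
  qed
  have "wz (\<lambda>n. D 0 (real n))" by (rule class_wz[OF C])
  moreover have "D 0 (real n) = (\<Sum>i<k. of_int (hv i) * (real (n + i) powr c / real m))" for n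
    unfolding D_def w_def by (simp add: sum_distrib_left)
  ultimately show ?thesis by simp
qed

definition evl :: "(complex \<times> int) list \<Rightarrow> real \<Rightarrow> complex" where
  "evl L y = (\<Sum>p\<leftarrow>L. fst p * ee (of_int (snd p) * y))"

definition cst :: "(complex \<times> int) list \<Rightarrow> complex" where
  "cst L = (\<Sum>p\<leftarrow>L. if snd p = 0 then fst p else 0)"

definition prodL :: "(complex \<times> int) list \<Rightarrow> (complex \<times> int) list \<Rightarrow> (complex \<times> int) list" where
  "prodL L1 L2 = concat (map (\<lambda>p. map (\<lambda>q. (fst p * fst q, snd p + snd q)) L2) L1)"

definition shiftL :: "real \<Rightarrow> (complex \<times> int) list \<Rightarrow> (complex \<times> int) list" where
  "shiftL s L = map (\<lambda>p. (fst p * ee (of_int (snd p) * s), snd p)) L"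

lemma ee_0 [simp]: "ee 0 = 1" by (simp add: ee_def)

lemma evl_Nil [simp]: "evl [] y = 0" by (simp add: evl_def)
lemma evl_Cons [simp]: "evl (p # L) y = fst p * ee (of_int (snd p) * y) + evl L y" by (simp add: evl_def)
lemma evl_append [simp]: "evl (L1 @ L2) y = evl L1 y + evl L2 y" by (simp add: evl_def)
lemma cst_Nil [simp]: "cst [] = 0" by (simp add: cst_def)
lemma cst_Cons [simp]: "cst (p # L) = (if snd p = 0 then fst p else 0) + cst L" by (simp add: cst_def)

lemma evl_map_mult:
  "evl (map (\<lambda>q. (a * fst q, h + snd q)) L2) y = a * ee (of_int h * y) * evl L2 y"
  by (induction L2) (simp_all add: algebra_simps ee_add[symmetric])

lemma evl_prodL: "evl (prodL L1 L2) y = evl L1 y * evl L2 y"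
  by (induction L1) (simp_all add: prodL_def evl_map_mult algebra_simps)

lemma evl_shiftL: "evl (shiftL s L) y = evl L (y + s)"
  by (induction L) (simp_all add: shiftL_def algebra_simps ee_add[symmetric])

lemma cst_shiftL: "cst (shiftL s L) = cst L"
  by (induction L) (simp_all add: shiftL_def)

lemma freq_bound: "\<exists>Q0::nat. \<forall>p\<in>set L. \<bar>snd p\<bar> < int Q0"
proof (induction L)
  case Nil then show ?case by simp
next
  case (Cons p L)
  then obtain Q0 where Q0: "\<forall>p\<in>set L. \<bar>snd p\<bar> < int Q0" by blast
  define Q1 where "Q1 = max Q0 (nat \<bar>snd p\<bar> + 1)"
  have "\<forall>q\<in>set (p # L). \<bar>snd q\<bar> < int Q1" using Q0 unfolding Q1_def by force
  then show ?case by blast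
qed

lemma ee_int: "ee (of_int h) = 1"
  unfolding ee_def by (simp add: cis_multiple_2pi)

lemma grid_char:
  fixes h :: int and Q :: nat
  assumes Q: "Q > 0" and hQ: "\<bar>h\<bar> < int Q"
  shows "(\<Sum>j<Q. ee (of_int h * (real j / real Q))) = (if h = 0 then of_nat Q else 0)"
proof (cases "h = 0")
  case True then show ?thesis by (simp add: ee_def)
next
  case False
  define z where "z = ee (of_int h / real Q)"
  have zj: "ee (of_int h * (real j / real Q)) = z ^ j" for j
    unfolding z_def ee_def Complex.DeMoivre by (simp add: algebra_simps)
  have zQ: "z ^ Q = 1"
  proof -
    have "z ^ Q = ee (of_int h * (real Q / real Q))" using zj[of Q] by simp
    also have "\<dots> = ee (of_int h)" using Q by simp
    also have "\<dots> = 1" by (rule ee_int)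
    finally show ?thesis .
  qed
  have z1: "z \<noteq> 1"
  proof
    assume "z = 1"
    then have "cos (2 * pi * (of_int h / real Q)) = 1"
      unfolding z_def ee_def by (metis cis.sel(1) one_complex.sel(1))
    then obtain n :: int where n: "2 * pi * (of_int h / real Q) = of_int n * 2 * pi"
      by (auto simp: cos_one_2pi_int)
    have "of_int h / real Q = (2 * pi * (of_int h / real Q)) / (2 * pi)" by simp
    also have "\<dots> = (of_int n * 2 * pi) / (2 * pi)" by (simp only: n)
    also have "\<dots> = of_int n" by simp
    finally have "of_int h / real Q = of_int n" .
    then have hn: "of_int h = of_int n * real Q" using Q by (simp add: field_simps)
    then have "h = n * int Q" by (metis of_int_eq_iff of_int_mult of_int_of_nat_eq)
    then show False using hQ False by (auto simp: abs_mult)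
  qed
  have "(\<Sum>j<Q. ee (of_int h * (real j / real Q))) = (\<Sum>j<Q. z ^ j)" by (rule sum.cong[OF refl zj])
  also have "\<dots> = 0" using z1 zQ by (simp add: sum_gp_strict)
  finally show ?thesis using False by simp
qed

lemma grid_cst:
  assumes Q: "Q > 0" and hQ: "\<forall>p\<in>set L. \<bar>snd p\<bar> < int Q"
  shows "(\<Sum>j<Q. evl L (real j / real Q)) / of_nat Q = cst L"
  using hQ
proof (induction L)
  case Nil then show ?case by simp
next
  case (Cons p L)
  have "(\<Sum>j<Q. evl (p # L) (real j / real Q)) = fst p * (\<Sum>j<Q. ee (of_int (snd p) * (real j / real Q))) + (\<Sum>j<Q. evl L (real j / real Q))"
    by (simp add: sum.distrib sum_distrib_left)
  also have "(\<Sum>j<Q. ee (of_int (snd p) * (real j / real Q))) = (if snd p = 0 then of_nat Q else 0)"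
    using Cons.prems Q by (intro grid_char) auto
  finally show ?case using Cons Q by (auto simp: add_divide_distrib)
qed

lemma cos_evl: "complex_of_real (cos (2 * pi * y)) = evl [(1/2, 1), (1/2, -1)] y"
proof -
  have "complex_of_real (cos (2 * pi * y)) = 1/2 * cis (2 * pi * y) + 1/2 * cis (- (2 * pi * y))"
    by (simp add: complex_eq_iff)
  moreover have "evl [(1/2, 1), (1/2, -1)] y = 1/2 * cis (2 * pi * y) + 1/2 * cis (- (2 * pi * y))"
    by (simp add: ee_def)
  ultimately show ?thesis by simp
qed

lemma poly_trig:
  assumes "real_polynomial_function p"
  shows "\<exists>L. \<forall>y. complex_of_real (p (cos (2 * pi * y))) = evl L y"
  using assms
proof (induction p rule: real_polynomial_function.induct)
  case (linear f)
  then obtain a :: real where f: "f = (\<lambda>x. x * a)" by (auto simp: real_bounded_linear)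
  have "complex_of_real (f (cos (2 * pi * y))) = evl [(of_real a / 2, 1), (of_real a / 2, -1)] y" for y
  proof -
    have "complex_of_real (f (cos (2 * pi * y))) = of_real a * evl [(1/2, 1), (1/2, -1)] y"
      unfolding f of_real_mult cos_evl by (rule mult.commute)
    moreover have "evl [(of_real a / 2, 1), (of_real a / 2, -1)] y = of_real a * evl [(1/2, 1), (1/2, -1)] y"
      by (simp add: algebra_simps)
    ultimately show ?thesis by simp
  qed
  then show ?case by blast
next
  case (const c)
  have "complex_of_real c = evl [(of_real c, 0)] y" for y by (simp add: ee_def)
  then show ?case by blast
next
  case (add f g)
  then obtain L1 L2 where "\<forall>y. complex_of_real (f (cos (2 * pi * y))) = evl L1 y" "\<forall>y. complex_of_real (g (cos (2 * pi * y))) = evl L2 y" by blast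
  then have "\<forall>y. complex_of_real (f (cos (2 * pi * y)) + g (cos (2 * pi * y))) = evl (L1 @ L2) y" by simp
  then show ?case by blast
next
  case (mult f g)
  then obtain L1 L2 where "\<forall>y. complex_of_real (f (cos (2 * pi * y))) = evl L1 y" "\<forall>y. complex_of_real (g (cos (2 * pi * y))) = evl L2 y" by blast
  then have "\<forall>y. complex_of_real (f (cos (2 * pi * y)) * g (cos (2 * pi * y))) = evl (prodL L1 L2) y" by (simp add: evl_prodL)
  then show ?case by blast
qed

primrec chs :: "(nat \<Rightarrow> (complex \<times> int) list) \<Rightarrow> nat \<Rightarrow> (complex \<times> (nat \<Rightarrow> int)) list" where
  "chs Ls 0 = [(1, \<lambda>_. 0)]"
| "chs Ls (Suc k) = concat (map (\<lambda>p. map (\<lambda>q. (fst p * fst q, (snd p)(k := snd q))) (Ls k)) (chs Ls k))"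

lemma sum_list_concat_map:
  "(\<Sum>z\<leftarrow>concat (map f xs). g z) = (\<Sum>x\<leftarrow>xs. \<Sum>z\<leftarrow>f x. g z)"
  by (induction xs) simp_all

lemma chs_B:
  "(\<Prod>i<k. evl (Ls i) (y i)) = (\<Sum>p\<leftarrow>chs Ls k. fst p * ee (\<Sum>i<k. of_int (snd p i) * y i))"
proof (induction k)
  case 0 then show ?case by simp
next
  case (Suc k)
  have inner: "(\<Sum>q\<leftarrow>Ls k. fst p * fst q * ee (\<Sum>i<Suc k. of_int (((snd p)(k := snd q)) i) * y i))
      = fst p * ee (\<Sum>i<k. of_int (snd p i) * y i) * evl (Ls k) (y k)" for p
  proof -
    have e: "(\<Sum>i<Suc k. of_int (((snd p)(k := snd q)) i) * y i) = (\<Sum>i<k. of_int (snd p i) * y i) + of_int (snd q) * y k" for q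
    proof -
      have "(\<Sum>i<Suc k. of_int (((snd p)(k := snd q)) i) * y i) = (\<Sum>i<k. of_int (((snd p)(k := snd q)) i) * y i) + of_int (snd q) * y k"
        by simp
      also have "(\<Sum>i<k. of_int (((snd p)(k := snd q)) i) * y i) = (\<Sum>i<k. of_int (snd p i) * y i)"
        by (rule sum.cong) auto
      finally show ?thesis .
    qed
    have "(\<Sum>q\<leftarrow>Ls k. fst p * fst q * ee (\<Sum>i<Suc k. of_int (((snd p)(k := snd q)) i) * y i))
        = (\<Sum>q\<leftarrow>Ls k. (fst p * ee (\<Sum>i<k. of_int (snd p i) * y i)) * (fst q * ee (of_int (snd q) * y k)))"
      unfolding e ee_add by (simp add: algebra_simps)
    also have "\<dots> = fst p * ee (\<Sum>i<k. of_int (snd p i) * y i) * evl (Ls k) (y k)"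
      unfolding evl_def by (rule sum_list_const_mult)
    finally show ?thesis .
  qed
  have "(\<Prod>i<Suc k. evl (Ls i) (y i)) = (\<Sum>p\<leftarrow>chs Ls k. fst p * ee (\<Sum>i<k. of_int (snd p i) * y i)) * evl (Ls k) (y k)"
    using Suc by simp
  also have "\<dots> = (\<Sum>p\<leftarrow>chs Ls k. fst p * ee (\<Sum>i<k. of_int (snd p i) * y i) * evl (Ls k) (y k))"
    by (rule sum_list_mult_const[symmetric])
  also have "\<dots> = (\<Sum>p\<leftarrow>chs Ls (Suc k). fst p * ee (\<Sum>i<Suc k. of_int (snd p i) * y i))"
  proof -
    have inner': "(\<Sum>z\<leftarrow>map (\<lambda>q. (fst p * fst q, (snd p)(k := snd q))) (Ls k). fst z * ee (\<Sum>i<Suc k. of_int (snd z i) * y i))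
       = fst p * ee (\<Sum>i<k. of_int (snd p i) * y i) * evl (Ls k) (y k)" for p
      unfolding inner[symmetric] by (simp only: map_map o_def fst_conv snd_conv)
    show ?thesis by (simp only: chs.simps sum_list_concat_map inner')
  qed
  finally show ?case .
qed

lemma chs_C:
  "(\<Sum>p\<leftarrow>chs Ls k. if (\<forall>i<k. snd p i = 0) then fst p else 0) = (\<Prod>i<k. cst (Ls i))"
proof (induction k)
  case 0 then show ?case by simp
next
  case (Suc k)
  have inner: "(\<Sum>q\<leftarrow>Ls k. if (\<forall>i<Suc k. ((snd p)(k := snd q)) i = 0) then fst p * fst q else 0)
      = (if (\<forall>i<k. snd p i = 0) then fst p else 0) * cst (Ls k)" for p
  proof -
    have e: "(\<forall>i<Suc k. ((snd p)(k := snd q)) i = 0) \<longleftrightarrow> (\<forall>i<k. snd p i = 0) \<and> snd q = 0" for q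
      by (auto simp: less_Suc_eq)
    have "(\<Sum>q\<leftarrow>Ls k. if (\<forall>i<Suc k. ((snd p)(k := snd q)) i = 0) then fst p * fst q else 0)
        = (\<Sum>q\<leftarrow>Ls k. (if (\<forall>i<k. snd p i = 0) then fst p else 0) * (if snd q = 0 then fst q else 0))"
      unfolding e by (intro arg_cong[where f=sum_list] map_cong) auto
    also have "\<dots> = (if (\<forall>i<k. snd p i = 0) then fst p else 0) * cst (Ls k)"
      unfolding cst_def by (rule sum_list_const_mult)
    finally show ?thesis .
  qed
  have "(\<Prod>i<Suc k. cst (Ls i)) = (\<Sum>p\<leftarrow>chs Ls k. if (\<forall>i<k. snd p i = 0) then fst p else 0) * cst (Ls k)"
    using Suc by simp
  also have "\<dots> = (\<Sum>p\<leftarrow>chs Ls k. (if (\<forall>i<k. snd p i = 0) then fst p else 0) * cst (Ls k))"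
    by (rule sum_list_mult_const[symmetric])
  also have "\<dots> = (\<Sum>p\<leftarrow>chs Ls (Suc k). if (\<forall>i<Suc k. snd p i = 0) then fst p else 0)"
  proof -
    have inner': "(\<Sum>z\<leftarrow>map (\<lambda>q. (fst p * fst q, (snd p)(k := snd q))) (Ls k). if (\<forall>i<Suc k. snd z i = 0) then fst z else 0)
       = (if (\<forall>i<k. snd p i = 0) then fst p else 0) * cst (Ls k)" for p
      unfolding inner[symmetric] by (simp only: map_map o_def fst_conv snd_conv)
    show ?thesis by (simp only: chs.simps sum_list_concat_map inner')
  qed
  finally show ?case by simp
qed

lemma sum_sum_list_swap:
  "(\<Sum>n<N. \<Sum>p\<leftarrow>C. f p n) = (\<Sum>p\<leftarrow>C. \<Sum>n<N. f p n)"
  by (induction C) (simp_all add: sum.distrib)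

lemma sl_div: "(\<Sum>p\<leftarrow>C. a p * X p) / (c::complex) = (\<Sum>p\<leftarrow>C. a p * (X p / c))"
  by (induction C) (simp_all add: add_divide_distrib)

lemma tendsto_sum_list:
  fixes F :: "'a \<Rightarrow> nat \<Rightarrow> complex"
  assumes "\<And>p. p \<in> set C \<Longrightarrow> (F p \<longlongrightarrow> l p) sequentially"
  shows "((\<lambda>N. \<Sum>p\<leftarrow>C. F p N) \<longlongrightarrow> (\<Sum>p\<leftarrow>C. l p)) sequentially"
  using assms by (induction C) (auto intro!: tendsto_add)

lemma weyl_prod:
  fixes y :: "nat \<Rightarrow> nat \<Rightarrow> real" and k :: nat
  assumes W: "\<And>hv. (\<exists>i<k. hv i \<noteq> 0) \<Longrightarrow> ((\<lambda>N. (\<Sum>n<N. ee (\<Sum>i<k. of_int (hv i) * y i n)) / of_nat N) \<longlongrightarrow> 0) sequentially"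
  shows "((\<lambda>N. (\<Sum>n<N. \<Prod>i<k. evl (Ls i) (y i n)) / of_nat N) \<longlongrightarrow> (\<Prod>i<k. cst (Ls i))) sequentially"
proof -
  define C where "C = chs Ls k"
  have eq: "(\<Sum>n<N. \<Prod>i<k. evl (Ls i) (y i n)) / of_nat N
      = (\<Sum>p\<leftarrow>C. fst p * ((\<Sum>n<N. ee (\<Sum>i<k. of_int (snd p i) * y i n)) / of_nat N))" for N
  proof -
    have "(\<Sum>n<N. \<Prod>i<k. evl (Ls i) (y i n)) = (\<Sum>n<N. \<Sum>p\<leftarrow>C. fst p * ee (\<Sum>i<k. of_int (snd p i) * y i n))"
      unfolding C_def by (simp add: chs_B)
    also have "\<dots> = (\<Sum>p\<leftarrow>C. fst p * (\<Sum>n<N. ee (\<Sum>i<k. of_int (snd p i) * y i n)))"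
      by (simp add: sum_sum_list_swap sum_distrib_left)
    finally show ?thesis by (simp only: sl_div)
  qed
  have lim: "((\<lambda>N. fst p * ((\<Sum>n<N. ee (\<Sum>i<k. of_int (snd p i) * y i n)) / of_nat N)) \<longlongrightarrow>
      (if (\<forall>i<k. snd p i = 0) then fst p else 0)) sequentially" for p
  proof (cases "\<forall>i<k. snd p i = 0")
    case True
    have "eventually (\<lambda>N. fst p * 1 = fst p * ((\<Sum>n<N. ee (\<Sum>i<k. of_int (snd p i) * y i n)) / of_nat N)) sequentially"
      using eventually_ge_at_top[of "1::nat"] by eventually_elim (simp add: True)
    then have "((\<lambda>N. fst p * ((\<Sum>n<N. ee (\<Sum>i<k. of_int (snd p i) * y i n)) / of_nat N)) \<longlongrightarrow> fst p * 1) sequentially"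
      by (rule Lim_transform_eventually[OF tendsto_const])
    then show ?thesis by (subst if_P[OF True]) simp
  next
    case False
    then have "\<exists>i<k. snd p i \<noteq> 0" by blast
    then have "((\<lambda>N. fst p * ((\<Sum>n<N. ee (\<Sum>i<k. of_int (snd p i) * y i n)) / of_nat N)) \<longlongrightarrow> fst p * 0) sequentially"
      by (intro tendsto_mult tendsto_const W)
    then show ?thesis by (subst if_not_P[OF False]) simp
  qed
  have "((\<lambda>N. \<Sum>p\<leftarrow>C. fst p * ((\<Sum>n<N. ee (\<Sum>i<k. of_int (snd p i) * y i n)) / of_nat N)) \<longlongrightarrow>
      (\<Sum>p\<leftarrow>C. if (\<forall>i<k. snd p i = 0) then fst p else 0)) sequentially"
    by (rule tendsto_sum_list) (rule lim)
  then show ?thesis unfolding eq C_def chs_C .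
qed

lemma card_interval_nat:
  fixes S :: "nat set"
  assumes fin: "finite S" and sub: "\<forall>j\<in>S. lo < real j \<and> real j < hi" and lohi: "lo \<le> hi"
  shows "real (card S) \<le> hi - lo + 1"
proof (cases "S = {}")
  case True then show ?thesis using lohi by simp
next
  case False
  have "S \<subseteq> {Min S..Max S}" using fin by auto
  then have "card S \<le> card {Min S..Max S}" by (rule card_mono[OF finite_atLeastAtMost])
  also have "\<dots> = Suc (Max S) - Min S" by simp
  finally have c: "real (card S) \<le> real (Max S) + 1 - real (Min S)"
    using Min_le[OF fin Max_in[OF fin False]] by linarith
  have "real (Max S) < hi" using sub Max_in[OF fin False] by blast
  moreover have "lo < real (Min S)" using sub Min_in[OF fin False] by blast
  ultimately show ?thesis using c by linarith
qed

lemma cos_near_half: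
  assumes t: "0 \<le> t" "t \<le> 1" and a: "0 \<le> a" "a \<le> pi" and c: "cos (2 * pi * t) < - cos a"
  shows "\<bar>t - 1/2\<bar> < a / (2 * pi)"
proof -
  define u where "u = \<bar>2 * pi * t - pi\<bar>"
  have u: "0 \<le> u" "u \<le> pi" unfolding u_def using t pi_gt_zero
    by (auto simp: abs_le_iff algebra_simps)
  have "cos (2 * pi * t) = - cos (2 * pi * t - pi)" by (simp add: cos_diff)
  also have "cos (2 * pi * t - pi) = cos u" unfolding u_def by simp
  finally have "cos a < cos u" using c by simp
  then have "u < a" using cos_mono_less_eq[OF a u] by simp
  moreover have "u = 2 * pi * \<bar>t - 1/2\<bar>"
  proof -
    have "2 * pi * t - pi = (2 * pi) * (t - 1/2)" by (simp add: algebra_simps)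
    then have "u = \<bar>2 * pi\<bar> * \<bar>t - 1/2\<bar>" unfolding u_def by (simp only: abs_mult)
    then show ?thesis by simp
  qed
  ultimately show ?thesis by (simp add: field_simps)
qed

lemma gadget:
  fixes m :: nat and d :: real
  assumes m: "m \<ge> 1" and d: "d > 0"
  shows "\<exists>L P \<mu>. (\<forall>y. complex_of_real (P y) = evl L y) \<and> (\<forall>y. P y \<ge> 0) \<and>
     (\<forall>y. cos (2 * pi * y) \<le> - cos (pi / real m) \<longrightarrow> P y \<ge> 1) \<and> cst L = complex_of_real \<mu> \<and> 0 \<le> \<mu> \<and> \<mu> \<le> 1 / real m + d"
proof (cases "m = 1")
  case True
  have "(\<forall>y. complex_of_real ((\<lambda>y. 1) y) = evl [(1, 0)] y) \<and> (\<forall>y. (\<lambda>y. 1::real) y \<ge> 0) \<and>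
     (\<forall>y. cos (2 * pi * y) \<le> - cos (pi / real m) \<longrightarrow> (\<lambda>y. 1::real) y \<ge> 1) \<and> cst [(1, 0)] = complex_of_real 1 \<and> 0 \<le> (1::real) \<and> (1::real) \<le> 1 / real m + d"
    using True d by simp
  then show ?thesis by (intro exI[where x="[(1, 0)]"] exI[where x="\<lambda>y::real. 1::real"] exI[where x="1::real"])
next
  case False
  then have m2: "real m \<ge> 2" using m by simp
  define th where "th = pi / real m"
  have th: "0 < th" "th \<le> pi / 2" unfolding th_def using m2 by (auto simp: field_simps)
  define eta where "eta = min (d * pi / 3) (pi / 4)"
  have eta: "0 < eta" "eta \<le> pi / 4" "eta / pi \<le> d / 3" unfolding eta_def using d by (auto simp: field_simps min_def)
  define a where "a = th + eta"
  have a: "0 < a" "a \<le> pi" "th < a" unfolding a_def using th eta by auto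
  define rho where "rho = cos th"
  define rho' where "rho' = cos a"
  have rr: "rho' < rho" unfolding rho_def rho'_def using th a by (intro cos_monotone_0_pi) auto
  define phi where "phi x = max 0 (min 1 ((- rho' - x) / (rho - rho')))" for x
  have phi_cont: "continuous_on {-1..1} phi" unfolding phi_def using rr by (intro continuous_intros) auto
  have phi01: "0 \<le> phi x" "phi x \<le> 1" for x unfolding phi_def by auto
  have phi1: "phi x = 1" if "x \<le> - rho" for x
  proof -
    have "(- rho' - x) / (rho - rho') \<ge> 1" using that rr by (simp add: field_simps)
    then show ?thesis unfolding phi_def by simp
  qed
  have phi0: "phi x = 0" if "x \<ge> - rho'" for x
  proof -
    have "(- rho' - x) / (rho - rho') \<le> 0" using that rr by (simp add: divide_nonpos_pos)
    then show ?thesis unfolding phi_def by simp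
  qed
  define e where "e = d / 6"
  have e: "e > 0" unfolding e_def using d by simp
  obtain g where gpoly: "polynomial_function g" and gap: "\<forall>x\<in>{-1..1}. norm (phi x - g x) < e"
    using Stone_Weierstrass_polynomial_function[OF compact_Icc phi_cont e] by blast
  have grp: "real_polynomial_function g" using gpoly by (simp add: real_polynomial_function_eq)
  obtain L0 where L0: "\<And>y. complex_of_real (g (cos (2 * pi * y))) = evl L0 y"
    using poly_trig[OF grp] by blast
  define P where "P y = g (cos (2 * pi * y)) + e" for y
  define L where "L = L0 @ [(complex_of_real e, 0)]"
  have PL: "complex_of_real (P y) = evl L y" for y unfolding P_def L_def by (simp add: L0)
  have gc: "\<bar>phi (cos (2 * pi * y)) - g (cos (2 * pi * y))\<bar> < e" for y
    using gap cos_ge_minus_one cos_le_one by (simp add: real_norm_def)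
  have Plow: "P y > phi (cos (2 * pi * y))" for y using gc[of y] unfolding P_def by linarith
  have Pup: "P y < phi (cos (2 * pi * y)) + 2 * e" for y using gc[of y] unfolding P_def by linarith
  have P0: "P y \<ge> 0" for y using Plow[of y] phi01[of "cos (2 * pi * y)"] by linarith
  have P1: "P y \<ge> 1" if "cos (2 * pi * y) \<le> - cos (pi / real m)" for y
    using Plow[of y] phi1[of "cos (2 * pi * y)"] that unfolding rho_def th_def by simp
  obtain Q0 :: nat where Q0: "\<forall>p\<in>set L. \<bar>snd p\<bar> < int Q0" using freq_bound by blast
  define Q where "Q = max (max Q0 1) (nat \<lceil>6 / d\<rceil>)"
  have Qpos: "Q > 0" unfolding Q_def by simp
  have QQ0: "\<forall>p\<in>set L. \<bar>snd p\<bar> < int Q" using Q0 unfolding Q_def by fastforce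
  have Qd: "1 / real Q \<le> d / 6"
  proof -
    have "real Q \<ge> 6 / d" unfolding Q_def by linarith
    then show ?thesis using d Qpos by (simp add: field_simps)
  qed
  define mu where "mu = (\<Sum>j<Q. P (real j / real Q)) / real Q"
  have cstL: "cst L = complex_of_real mu"
    using grid_cst[OF Qpos QQ0] unfolding mu_def by (simp add: PL[symmetric])
  define S where "S = {j. j < Q \<and> cos (2 * pi * (real j / real Q)) < - rho'}"
  have finS: "finite S" unfolding S_def by simp
  have Pj: "P (real j / real Q) \<le> (if j \<in> S then 1 else 0) + 2 * e" if "j < Q" for j
  proof (cases "j \<in> S")
    case True
    have "P (real j / real Q) < phi (cos (2 * pi * (real j / real Q))) + 2 * e" by (rule Pup)
    moreover have "phi (cos (2 * pi * (real j / real Q))) \<le> 1" by (rule phi01)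
    ultimately show ?thesis using True by simp
  next
    case False
    then have "cos (2 * pi * (real j / real Q)) \<ge> - rho'" using that unfolding S_def by auto
    then have "phi (cos (2 * pi * (real j / real Q))) = 0" by (rule phi0)
    then show ?thesis using Pup[of "real j / real Q"] False by simp
  qed
  have "(\<Sum>j<Q. P (real j / real Q)) \<le> (\<Sum>j<Q. (if j \<in> S then 1 else 0) + 2 * e)"
    by (intro sum_mono Pj) simp
  also have "\<dots> = real (card S) + 2 * e * real Q"
  proof -
    have "(\<Sum>j<Q. (if j \<in> S then 1 else 0::real)) = real (card ({..<Q} \<inter> S))"
      by (simp add: sum.If_cases)
    also have "{..<Q} \<inter> S = S" unfolding S_def by auto
    finally show ?thesis by (simp add: sum.distrib)
  qed
  finally have sumP: "(\<Sum>j<Q. P (real j / real Q)) \<le> real (card S) + 2 * e * real Q" .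
  define w where "w = a / (2 * pi)"
  have w0: "w \<ge> 0" unfolding w_def using a by simp
  have Sint: "\<forall>j\<in>S. real Q / 2 - w * real Q < real j \<and> real j < real Q / 2 + w * real Q"
  proof
    fix j assume "j \<in> S"
    then have j: "j < Q" "cos (2 * pi * (real j / real Q)) < - cos a" unfolding S_def rho'_def by auto
    have "\<bar>real j / real Q - 1/2\<bar> < w"
      unfolding w_def using j Qpos a by (intro cos_near_half) auto
    then have "\<bar>real j / real Q - 1/2\<bar> * real Q < w * real Q" using Qpos by simp
    moreover have "\<bar>real j / real Q - 1/2\<bar> * real Q = \<bar>real j - real Q / 2\<bar>"
      using Qpos by (simp add: abs_mult_pos[symmetric] field_simps abs_mult)
    ultimately have "\<bar>real j - real Q / 2\<bar> < w * real Q" by simp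
    then show "real Q / 2 - w * real Q < real j \<and> real j < real Q / 2 + w * real Q"
      unfolding abs_less_iff by linarith
  qed
  have cardS: "real (card S) \<le> 2 * w * real Q + 1"
    using card_interval_nat[OF finS Sint] w0 Qpos by simp
  have "mu \<le> (2 * w * real Q + 1 + 2 * e * real Q) / real Q"
    unfolding mu_def using sumP cardS Qpos by (simp add: divide_right_mono)
  also have "\<dots> = 2 * w + 1 / real Q + 2 * e" using Qpos by (simp add: field_simps)
  also have "2 * w = 1 / real m + eta / pi" unfolding w_def a_def th_def by (simp add: field_simps)
  finally have "mu \<le> 1 / real m + eta / pi + 1 / real Q + 2 * e" by simp
  also have "\<dots> \<le> 1 / real m + d" using eta(3) Qd d unfolding e_def by linarith
  finally have mud: "mu \<le> 1 / real m + d" .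
  have mu0: "0 \<le> mu" unfolding mu_def using P0 by (simp add: sum_nonneg)
  show ?thesis using PL P0 P1 cstL mu0 mud by blast
qed

lemma match_cos:
  fixes x :: real and m :: nat and b :: int
  assumes m: "m > 0" and b: "0 \<le> b" "b < int m" and hb: "\<lfloor>x\<rfloor> mod int m = b"
  shows "cos (2 * pi * (x / real m + (1/2 - (2 * real_of_int b + 1) / (2 * real m)))) \<le> - cos (pi / real m)"
proof -
  define q where "q = \<lfloor>x\<rfloor> div int m"
  have fl: "\<lfloor>x\<rfloor> = q * int m + b" unfolding q_def using hb by (metis div_mult_mod_eq)
  define f where "f = x - real_of_int \<lfloor>x\<rfloor>"
  have f: "0 \<le> f" "f < 1" unfolding f_def by linarith+
  define v where "v = (f - 1/2) / real m"
  have mpos: "real m > 0" using m by simp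
  have xeq: "x = real_of_int q * real m + real_of_int b + f" unfolding f_def using fl by simp
  have arg: "x / real m + (1/2 - (2 * real_of_int b + 1) / (2 * real m)) = real_of_int q + 1/2 + v"
    unfolding v_def xeq using mpos by (simp add: field_simps)
  have "cos (2 * pi * (real_of_int q + 1/2 + v)) = cos ((2 * pi) * real_of_int q + (pi + 2 * pi * v))"
    by (simp add: algebra_simps)
  also have "\<dots> = cos (pi + 2 * pi * v)" by (simp add: cos_add)
  also have "\<dots> = - cos (2 * pi * v)" by (simp add: cos_add)
  finally have c1: "cos (2 * pi * (real_of_int q + 1/2 + v)) = - cos (2 * pi * v)" .
  have av: "\<bar>2 * pi * v\<bar> \<le> pi / real m"
  proof -
    have "\<bar>f - 1/2\<bar> \<le> 1/2" unfolding abs_le_iff using f by linarith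
    then have "\<bar>2 * pi * v\<bar> = 2 * pi * \<bar>f - 1/2\<bar> / real m" unfolding v_def using mpos by (simp add: abs_mult)
    also have "\<dots> \<le> 2 * pi * (1/2) / real m"
      using `\<bar>f - 1/2\<bar> \<le> 1/2` mpos by (intro divide_right_mono mult_left_mono) auto
    finally show ?thesis by simp
  qed
  have pm: "pi / real m \<le> pi" using m by (simp add: field_simps)
  have "cos (pi / real m) \<le> cos \<bar>2 * pi * v\<bar>"
    using av pm by (intro cos_monotone_0_pi_le) auto
  then have "cos (pi / real m) \<le> cos (2 * pi * v)" by simp
  then show ?thesis unfolding arg c1 by simp
qed

lemma card_as_sum:
  fixes N :: nat
  shows "real (card {n. n < N \<and> Q n}) = (\<Sum>n<N. if Q n then 1 else (0::real))"
proof -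
  have "finite {..<N}" by simp
  from sum.inter_filter[OF this, of "\<lambda>_. 1::real" Q] show ?thesis by simp
qed

lemma upper_bound:
  fixes c :: real and m k :: nat and B :: "int list" and d :: real
  assumes W: "\<And>hv. (\<exists>i<k. hv i \<noteq> 0) \<Longrightarrow> ((\<lambda>N. (\<Sum>n<N. ee (\<Sum>i<k. of_int (hv i) * (real (n + i) powr c / real m))) / of_nat N) \<longlonglongrightarrow> 0)"
    and m: "m > 0" and B: "length B = k" "set B \<subseteq> {0..<int m}" and d: "d > 0"
  shows "eventually (\<lambda>N. real (card {n. n < N \<and> (\<forall>i<k. \<lfloor>real (n + i) powr c\<rfloor> mod int m = B ! i)}) / real N
      \<le> (1 / real m + d) ^ k + d) sequentially"
proof -
  obtain L P mu where PL: "\<forall>y. complex_of_real (P y) = evl L y" and P0: "\<forall>y. P y \<ge> 0"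
    and P1: "\<forall>y. cos (2 * pi * y) \<le> - cos (pi / real m) \<longrightarrow> P y \<ge> 1"
    and cstL: "cst L = complex_of_real mu" and mu0: "0 \<le> mu" and mud: "mu \<le> 1 / real m + d"
    using gadget[of m d] m d by auto
  define s where "s i = 1/2 - (2 * real_of_int (B ! i) + 1) / (2 * real m)" for i
  define y where "y i n = real (n + i) powr c / real m" for i n
  define Ls where "Ls i = shiftL (s i) L" for i
  have evLs: "evl (Ls i) t = complex_of_real (P (t + s i))" for i t
    unfolding Ls_def evl_shiftL using PL by simp
  have W': "((\<lambda>N. (\<Sum>n<N. ee (\<Sum>i<k. of_int (hv i) * y i n)) / of_nat N) \<longlonglongrightarrow> 0)" if "\<exists>i<k. hv i \<noteq> 0" for hv
    unfolding y_def using W[OF that] .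
  have lim: "((\<lambda>N. (\<Sum>n<N. \<Prod>i<k. evl (Ls i) (y i n)) / of_nat N) \<longlonglongrightarrow> (\<Prod>i<k. cst (Ls i)))"
    by (rule weyl_prod[OF W'])
  define A where "A N = (\<Sum>n<N. \<Prod>i<k. P (y i n + s i)) / real N" for N
  have "(\<lambda>N. (\<Sum>n<N. \<Prod>i<k. evl (Ls i) (y i n)) / of_nat N) = (\<lambda>N. complex_of_real (A N))"
    unfolding A_def evLs by (simp add: of_real_prod)
  moreover have "(\<Prod>i<k. cst (Ls i)) = complex_of_real (mu ^ k)"
    unfolding Ls_def cst_shiftL cstL by simp
  ultimately have "(\<lambda>N. complex_of_real (A N)) \<longlonglongrightarrow> complex_of_real (mu ^ k)" using lim by (simp only:)
  then have Alim: "A \<longlonglongrightarrow> mu ^ k" by (subst (asm) tendsto_of_real_iff)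
  have ev1: "eventually (\<lambda>N. A N < mu ^ k + d) sequentially"
    using Alim d by (intro order_tendstoD(2)) auto
  have muk: "mu ^ k \<le> (1 / real m + d) ^ k" using mu0 mud by (intro power_mono) auto
  show ?thesis using ev1 eventually_ge_at_top[of "1::nat"]
  proof eventually_elim
    case (elim N)
    have "real (card {n. n < N \<and> (\<forall>i<k. \<lfloor>real (n + i) powr c\<rfloor> mod int m = B ! i)})
        = (\<Sum>n<N. if (\<forall>i<k. \<lfloor>real (n + i) powr c\<rfloor> mod int m = B ! i) then 1 else 0)"
      by (rule card_as_sum)
    also have "\<dots> \<le> (\<Sum>n<N. \<Prod>i<k. P (y i n + s i))"
    proof (intro sum_mono)
      fix n assume "n \<in> {..<N}"
      show "(if (\<forall>i<k. \<lfloor>real (n + i) powr c\<rfloor> mod int m = B ! i) then 1 else 0) \<le> (\<Prod>i<k. P (y i n + s i))"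
      proof (cases "\<forall>i<k. \<lfloor>real (n + i) powr c\<rfloor> mod int m = B ! i")
        case True
        have "1 \<le> P (y i n + s i)" if i: "i \<in> {..<k}" for i
        proof -
          have bi: "B ! i \<in> set B" using i B(1) by simp
          then have b: "0 \<le> B ! i" "B ! i < int m" using B(2) by auto
          have "cos (2 * pi * (y i n + s i)) \<le> - cos (pi / real m)"
            unfolding y_def s_def using match_cos[OF m b] True i by simp
          then show ?thesis using P1 by blast
        qed
        then have "1 \<le> (\<Prod>i<k. P (y i n + s i))" by (rule prod_ge_1)
        then show ?thesis using True by simp
      next
        case False
        have "0 \<le> (\<Prod>i<k. P (y i n + s i))" using P0 by (intro prod_nonneg) auto
        then show ?thesis by (subst if_not_P[OF False])
      qed
    qed
    finally have "real (card {n. n < N \<and> (\<forall>i<k. \<lfloor>real (n + i) powr c\<rfloor> mod int m = B ! i)}) / real N \<le> A N"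
      unfolding A_def using elim by (simp add: divide_right_mono)
    then show ?case using elim muk by linarith
  qed
qed

lemma blocks_partition:
  fixes u :: "nat \<Rightarrow> int" and m k N :: nat
  assumes m: "m > 0"
  shows "(\<Sum>B\<in>{B. set B \<subseteq> {0..<int m} \<and> length B = k}. real (card {n. n < N \<and> (\<forall>i<k. u (n + i) mod int m = B ! i)})) = real N"
proof -
  define Bl where "Bl = {B. set B \<subseteq> {0..<int m} \<and> length B = k}"
  have finBl: "finite Bl" unfolding Bl_def by (rule finite_lists_length_eq) simp
  define bl where "bl n = map (\<lambda>i. u (n + i) mod int m) [0..<k]" for n
  have blin: "bl n \<in> Bl" for n
    unfolding Bl_def bl_def using m by auto
  have iff: "(\<forall>i<k. u (n + i) mod int m = B ! i) \<longleftrightarrow> B = bl n" if "B \<in> Bl" for B n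
  proof -
    have lB: "length B = k" using that unfolding Bl_def by simp
    show ?thesis
    proof
      assume h: "\<forall>i<k. u (n + i) mod int m = B ! i"
      show "B = bl n" by (rule nth_equalityI) (use lB h in \<open>auto simp: bl_def\<close>)
    next
      assume "B = bl n"
      then show "\<forall>i<k. u (n + i) mod int m = B ! i" by (simp add: bl_def)
    qed
  qed
  have "(\<Sum>B\<in>Bl. real (card {n. n < N \<and> (\<forall>i<k. u (n + i) mod int m = B ! i)}))
      = (\<Sum>B\<in>Bl. \<Sum>n<N. if B = bl n then 1 else 0)"
    by (intro sum.cong refl) (simp add: card_as_sum iff cong: if_cong)
  also have "\<dots> = (\<Sum>n<N. \<Sum>B\<in>Bl. if B = bl n then 1 else 0)" by (rule sum.swap)
  also have "\<dots> = (\<Sum>n<N. 1)" using finBl blin by (simp add: sum.delta')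
  finally show ?thesis unfolding Bl_def by simp
qed

lemma choose_d:
  fixes a e :: real and k :: nat
  assumes e: "e > 0"
  shows "\<exists>d>0. (a + d) ^ k + d < a ^ k + e"
proof -
  have "((\<lambda>d. (a + d) ^ k + d) \<longlongrightarrow> (a + 0) ^ k + 0) (at_right 0)"
    by (intro tendsto_intros)
  then have "eventually (\<lambda>d. (a + d) ^ k + d < a ^ k + e) (at_right (0::real))"
    using e by (intro order_tendstoD(2)) auto
  then obtain b where b: "b > 0" "\<And>y. y > 0 \<Longrightarrow> y < b \<Longrightarrow> (a + y) ^ k + y < a ^ k + e"
    by (auto simp: eventually_at_right[of 0 1])
  show ?thesis using b(1) b(2)[of "b / 2"] by (intro exI[of _ "b / 2"]) auto
qed

theorem theorem1:
  fixes c :: real and m :: nat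
  assumes "c > 1" and "c \<notin> \<int>" and "m > 0"
  shows "\<forall>k::nat. 1 \<le> k \<and> real k \<le> c + 1 \<longrightarrow>
           k_unif_distrib_mod k m (\<lambda>n. \<lfloor>real n powr c\<rfloor>)"
proof (intro allI impI)
  fix k :: nat assume k: "1 \<le> k \<and> real k \<le> c + 1"
  have m: "m > 0" using assms(3) .
  have W: "((\<lambda>N. (\<Sum>n<N. ee (\<Sum>i<k. of_int (hv i) * (real (n + i) powr c / real m))) / of_nat N) \<longlonglongrightarrow> 0)"
    if hyp: "\<exists>i<k. hv i \<noteq> 0" for hv
  proof -
    obtain i0 where i0: "i0 < k" "hv i0 \<noteq> 0" using hyp by blast
    have "wz (\<lambda>n. \<Sum>i<k. of_int (hv i) * (real (n + i) powr c / real m))"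
      using F_wz[of c m k i0 hv] assms i0 k by blast
    then show ?thesis unfolding wz_def .
  qed
  define Bl where "Bl = {B. set B \<subseteq> {0..<int m} \<and> length B = k}"
  have finBl: "finite Bl" unfolding Bl_def by (rule finite_lists_length_eq) simp
  define cnt where "cnt B N = real (card {n. n < N \<and> (\<forall>i<k. \<lfloor>real (n + i) powr c\<rfloor> mod int m = B ! i)})" for B N
  define M where "M = real m ^ k"
  have M1: "M \<ge> 1" unfolding M_def using m by simp
  have cardBl: "real (card Bl) = M"
    unfolding Bl_def M_def using card_lists_length_eq[of "{0..<int m}" k] by simp
  have part: "(\<Sum>B\<in>Bl. cnt B N) = real N" for N
    unfolding Bl_def cnt_def by (rule blocks_partition[OF m])
  have upper: "eventually (\<lambda>N. cnt B N / real N \<le> (1 / real m + d) ^ k + d) sequentially"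
    if "B \<in> Bl" "d > 0" for B d
    unfolding cnt_def using that by (intro upper_bound[OF W m]) (auto simp: Bl_def)
  show "k_unif_distrib_mod k m (\<lambda>n. \<lfloor>real n powr c\<rfloor>)"
    unfolding k_unif_distrib_mod_def
  proof (intro allI impI)
    fix B :: "int list" assume B: "length B = k \<and> set B \<subseteq> {0..<int m}"
    then have BBl: "B \<in> Bl" unfolding Bl_def by simp
    have main: "eventually (\<lambda>N. \<bar>cnt B N / real N - 1 / M\<bar> < e) sequentially" if e: "e > 0" for e
    proof -
      define e' where "e' = e / (M + 1)"
      have e': "e' > 0" unfolding e'_def using e M1 by simp
      have Me: "(M + 1) * e' = e" unfolding e'_def using M1 by simp
      obtain d where d: "d > 0" "(1 / real m + d) ^ k + d < (1 / real m) ^ k + e'"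
        using choose_d[OF e'] by blast
      have pk: "(1 / real m) ^ k = 1 / M" unfolding M_def by (simp add: power_one_over)
      have evall: "eventually (\<lambda>N. \<forall>B'\<in>Bl. cnt B' N / real N \<le> (1 / real m + d) ^ k + d) sequentially"
        using finBl upper d(1) by (intro eventually_ball_finite) auto
      show ?thesis using evall eventually_ge_at_top[of "1::nat"]
      proof eventually_elim
        case (elim N)
        have Npos: "real N > 0" using elim by simp
        have up: "cnt B' N / real N < 1 / M + e'" if "B' \<in> Bl" for B'
          using elim that d(2) pk by fastforce
        have "(\<Sum>B'\<in>Bl. cnt B' N / real N) = 1"
          using part[of N] Npos by (simp add: sum_divide_distrib[symmetric])
        moreover have "(\<Sum>B'\<in>Bl. cnt B' N / real N) = cnt B N / real N + (\<Sum>B'\<in>Bl - {B}. cnt B' N / real N)"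
          using finBl BBl by (rule sum.remove)
        moreover have "(\<Sum>B'\<in>Bl - {B}. cnt B' N / real N) \<le> real (card (Bl - {B})) * (1 / M + e')"
          using up by (intro sum_bounded_above) (auto intro: less_imp_le)
        moreover have "real (card (Bl - {B})) = M - 1"
        proof -
          have cpos: "card Bl \<ge> 1" using finBl BBl by (metis One_nat_def Suc_leI card_gt_0_iff empty_iff)
          have "card (Bl - {B}) = card Bl - 1" using finBl BBl by (simp add: card_Diff_singleton)
          then show ?thesis using cpos cardBl by (simp add: of_nat_diff)
        qed
        moreover have "(M - 1) * (1 / M + e') = 1 - 1 / M + (M - 1) * e'"
          using M1 by (simp add: field_simps)
        moreover have "(M - 1) * e' < e" using Me e' by (simp add: algebra_simps)
        moreover have "cnt B N / real N < 1 / M + e'" using up BBl by blast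
        moreover have "e' \<le> e" using Me e' M1 by (smt (verit) mult_le_cancel_right1)
        ultimately show ?case by (simp add: abs_less_iff)
      qed
    qed
    have "(\<lambda>N. cnt B N / real N) \<longlonglongrightarrow> 1 / M"
      unfolding tendsto_iff dist_real_def using main by blast
    then show "(\<lambda>N. real (card {n. n < N \<and> (\<forall>i<k. \<lfloor>real (n + i) powr c\<rfloor> mod int m = B ! i)}) / real N) \<longlonglongrightarrow> 1 / real m ^ k"
      unfolding cnt_def M_def .
  qed
qed

end
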